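(* For each $k\in\{1,2,3,4\}$ there exists at least one finite simple graph $G$ with independence number four such that $\mathcal{A}(G)=[-\frac{4}{k},0]$. Further, for $k\in\{1,2\}$ there is no disconnected graph with independence number four whose independence attractor is $[-\frac{4}{k},0]$.
   Context: For a finite simple graph $G$, an independent set is a set of pairwise non-adjacent vertices. The independence polynomial is $I_G(z)=\sum_{i=0}^{\alpha} a_i z^i$, where $a_i$ is the number of independent sets of cardinality $i$ and $\alpha$ (the independence number) is the largest cardinality of an independent set. The lexicographic product $G[H]$ has vertex set $V(G)\times V(H)$, with $(u,v)\sim(u',v')$ iff $u\sim u'$ in $G$, or $u=u'$ and $v\sim v'$ in $H$. Let $G^m$ denote the $m$-fold lexicographic product of $G$ with itself. The independence attractor is $\mathcal{A}(G)=\lim_{m\to\infty}\{z\in\mathbb{C}: I_{G^m}(z)=0\}$, the limit taken in the Hausdorff metric on nonempty compact subsets of $\mathbb{C}$. *)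

theory Defs
  imports "HOL-Analysis.Analysis"
begin

definition simple_graph :: "'a set \<Rightarrow> ('a \<Rightarrow> 'a \<Rightarrow> bool) \<Rightarrow> bool" where
  "simple_graph V E \<longleftrightarrow> finite V \<and> (\<forall>x. \<not> E x x) \<and> (\<forall>x y. E x y \<longrightarrow> E y x)
     \<and> (\<forall>x y. E x y \<longrightarrow> x \<in> V \<and> y \<in> V)"

definition indep_set :: "'a set \<Rightarrow> ('a \<Rightarrow> 'a \<Rightarrow> bool) \<Rightarrow> 'a set \<Rightarrow> bool" where
  "indep_set V E S \<longleftrightarrow> S \<subseteq> V \<and> (\<forall>x\<in>S. \<forall>y\<in>S. \<not> E x y)"

definition indep_number :: "'a set \<Rightarrow> ('a \<Rightarrow> 'a \<Rightarrow> bool) \<Rightarrow> nat" where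
  "indep_number V E = Max (card ` {S. indep_set V E S})"

definition indep_poly :: "'a set \<Rightarrow> ('a \<Rightarrow> 'a \<Rightarrow> bool) \<Rightarrow> complex \<Rightarrow> complex" where
  "indep_poly V E z =
     (\<Sum>i\<le>indep_number V E. of_nat (card {S. indep_set V E S \<and> card S = i}) * z ^ i)"

definition graph_connected :: "'a set \<Rightarrow> ('a \<Rightarrow> 'a \<Rightarrow> bool) \<Rightarrow> bool" where
  "graph_connected V E \<longleftrightarrow> V \<noteq> {} \<and> (\<forall>u\<in>V. \<forall>v\<in>V. E\<^sup>*\<^sup>* u v)"

text \<open>m-fold lexicographic power G^m = G[G[...G]]: vertices are lists of length m
over V, the first entry being the outermost coordinate.\<close>
fun lex_adj :: "('a \<Rightarrow> 'a \<Rightarrow> bool) \<Rightarrow> 'a list \<Rightarrow> 'a list \<Rightarrow> bool" where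
  "lex_adj E (u # us) (v # vs) = (E u v \<or> (u = v \<and> lex_adj E us vs))"
| "lex_adj E _ _ = False"

definition lex_pow_V :: "'a set \<Rightarrow> nat \<Rightarrow> 'a list set" where
  "lex_pow_V V m = {xs. length xs = m \<and> set xs \<subseteq> V}"

definition indep_roots :: "'a set \<Rightarrow> ('a \<Rightarrow> 'a \<Rightarrow> bool) \<Rightarrow> complex set" where
  "indep_roots V E = {z. indep_poly V E z = 0}"

definition hausdorff_dist :: "'a::metric_space set \<Rightarrow> 'a set \<Rightarrow> real" where
  "hausdorff_dist A B = max (SUP a\<in>A. infdist a B) (SUP b\<in>B. infdist b A)"

definition indep_attractor_is :: "'a set \<Rightarrow> ('a \<Rightarrow> 'a \<Rightarrow> bool) \<Rightarrow> complex set \<Rightarrow> bool" where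
  "indep_attractor_is V E A \<longleftrightarrow> compact A \<and> A \<noteq> {} \<and>
     (\<forall>\<^sub>F m in sequentially. indep_roots (lex_pow_V V m) (lex_adj E) \<noteq> {}) \<and>
     ((\<lambda>m. hausdorff_dist (indep_roots (lex_pow_V V m) (lex_adj E)) A) \<longlonglongrightarrow> 0)"

end

theory Submission
  imports Defs "HOL-Computational_Algebra.Fundamental_Theorem_Algebra"
begin


definition ip :: "'a set \<Rightarrow> ('a \<Rightarrow> 'a \<Rightarrow> bool) \<Rightarrow> complex poly" where
  "ip V E = (\<Sum>S\<in>{S. indep_set V E S}. monom 1 (card S))"

lemma finite_indeps: "finite V \<Longrightarrow> finite {S. indep_set V E S}"
  by (rule finite_subset[of _ "Pow V"]) (auto simp: indep_set_def)

lemma indep_empty[simp]: "indep_set V E {}"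
  by (simp add: indep_set_def)

lemma ip_empty[simp]: "ip {} E = 1"
proof -
  have "{S. indep_set {} E S} = {{}}" by (auto simp: indep_set_def)
  then show ?thesis by (simp add: ip_def)
qed

lemma ip_single: assumes "\<not> E v v" shows "ip {v} E = [:1,1:]"
proof -
  have "{S. indep_set {v} E S} = {{}, {v}}" using assms by (auto simp: indep_set_def)
  then show ?thesis by (simp add: ip_def monom_Suc one_pCons)
qed

lemma ip_module:
  assumes fin: "finite W" and X: "X \<subseteq> W" and N: "N \<subseteq> W - X"
    and md: "\<And>x y. x \<in> X \<Longrightarrow> y \<in> W - X \<Longrightarrow> (E x y \<or> E y x) \<longleftrightarrow> y \<in> N"
  shows "ip W E = ip (W - X) E + (ip X E - 1) * ip (W - X - N) E"
proof -
  let ?I = "\<lambda>A. {S. indep_set A E S}"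
  let ?g = "\<lambda>(U, T). U \<union> T"
  let ?P = "(?I X - {{}}) \<times> ?I (W - X - N)"
  have split: "?I W = ?I (W - X) \<union> ?g ` ?P"
  proof (intro equalityI subsetI)
    fix T assume T: "T \<in> ?I W"
    show "T \<in> ?I (W - X) \<union> ?g ` ?P"
    proof (cases "T \<inter> X = {}")
      case True then show ?thesis using T by (auto simp: indep_set_def)
    next
      case False
      then obtain x where x: "x \<in> T" "x \<in> X" by auto
      have "T - X \<subseteq> W - X - N"
      proof
        fix y assume y: "y \<in> T - X"
        have "y \<in> W - X" using y T by (auto simp: indep_set_def)
        moreover have "\<not> (E x y \<or> E y x)" using x y T by (auto simp: indep_set_def)
        ultimately show "y \<in> W - X - N" using md[OF x(2)] by auto
      qed
      then have "(T \<inter> X, T - X) \<in> ?P" using T False by (auto simp: indep_set_def)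
      moreover have "T = ?g (T \<inter> X, T - X)" by auto
      ultimately show ?thesis by blast
    qed
  next
    fix T assume "T \<in> ?I (W - X) \<union> ?g ` ?P"
    then show "T \<in> ?I W"
    proof
      assume "T \<in> ?I (W - X)" then show ?thesis by (auto simp: indep_set_def)
    next
      assume "T \<in> ?g ` ?P"
      then obtain U T' where UT: "T = U \<union> T'" "U \<in> ?I X" "T' \<in> ?I (W - X - N)" by auto
      have "\<not> E a b" if ab: "a \<in> T" "b \<in> T" for a b
      proof -
        consider "a \<in> U" "b \<in> U" | "a \<in> T'" "b \<in> T'" | "a \<in> U" "b \<in> T'" | "a \<in> T'" "b \<in> U"
          using ab UT(1) by blast
        then show ?thesis
        proof cases
          case 1 then show ?thesis using UT by (auto simp: indep_set_def)
        next
          case 2 then show ?thesis using UT by (auto simp: indep_set_def)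
        next
          case 3
          then have "a \<in> X" "b \<in> W - X" "b \<notin> N" using UT by (auto simp: indep_set_def)
          then show ?thesis using md by blast
        next
          case 4
          then have "b \<in> X" "a \<in> W - X" "a \<notin> N" using UT by (auto simp: indep_set_def)
          then show ?thesis using md by blast
        qed
      qed
      moreover have "T \<subseteq> W" using UT X by (auto simp: indep_set_def)
      ultimately show ?thesis by (auto simp: indep_set_def)
    qed
  qed
  have disj: "?I (W - X) \<inter> ?g ` ?P = {}"
    by (auto simp: indep_set_def)
  have inj: "inj_on ?g ?P"
  proof (rule inj_onI)
    fix p q assume p: "p \<in> ?P" and q: "q \<in> ?P" and eq: "?g p = ?g q"
    obtain U T where pUT: "p = (U, T)" by (cases p)
    obtain U' T' where qUT: "q = (U', T')" by (cases q)
    have sub: "U \<subseteq> X" "T \<inter> X = {}" "U' \<subseteq> X" "T' \<inter> X = {}"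
      using p q pUT qUT by (auto simp: indep_set_def)
    have "U = (U \<union> T) \<inter> X" "T = (U \<union> T) - X" using sub by auto
    moreover have "U' = (U' \<union> T') \<inter> X" "T' = (U' \<union> T') - X" using sub by auto
    ultimately show "p = q" using eq pUT qUT by auto
  qed
  have finW: "finite (?I W)" using fin by (rule finite_indeps)
  have finA: "finite (?I (W - X))" using fin by (intro finite_indeps) auto
  have finX: "finite (?I X)" using fin X by (intro finite_indeps) (auto intro: finite_subset)
  have finB: "finite (?I (W - X - N))" using fin by (intro finite_indeps) auto
  have finP: "finite ?P" using finX finB by auto
  have "ip X E - 1 = (\<Sum>U\<in>?I X - {{}}. monom (1::complex) (card U))"
    unfolding ip_def using finX by (subst sum.remove[of _ "{}"]) auto
  then have "(ip X E - 1) * ip (W - X - N) E =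
      (\<Sum>U\<in>?I X - {{}}. \<Sum>T\<in>?I (W - X - N). monom (1::complex) (card U) * monom (1::complex) (card T))"
    by (simp add: ip_def sum_product)
  also have "\<dots> = (\<Sum>p\<in>?P. monom (1::complex) (card (?g p)))"
  proof -
    have "(\<Sum>U\<in>?I X - {{}}. \<Sum>T\<in>?I (W - X - N). monom (1::complex) (card U) * monom (1::complex) (card T))
        = (\<Sum>p\<in>?P. (\<lambda>(U,T). monom (1::complex) (card U) * monom (1::complex) (card T)) p)"
      by (rule sum.cartesian_product)
    also have "\<dots> = (\<Sum>p\<in>?P. monom (1::complex) (card (?g p)))"
    proof -
      have cardU: "card (U \<union> T) = card U + card T" if "indep_set X E U" "indep_set (W - X - N) E T" for U T
      proof -
        have "U \<subseteq> X" "T \<subseteq> W - X" using that by (auto simp: indep_set_def)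
        moreover have "finite U" "finite T" using calculation fin X by (auto intro: finite_subset)
        ultimately show ?thesis by (intro card_Un_disjoint) auto
      qed
      show ?thesis by (intro sum.cong refl) (auto simp: mult_monom cardU)
    qed
    finally show ?thesis .
  qed
  also have "\<dots> = (\<Sum>S\<in>?g ` ?P. monom (1::complex) (card S))"
    using inj by (simp add: sum.reindex)
  finally have "(ip X E - 1) * ip (W - X - N) E = (\<Sum>S\<in>?g ` ?P. monom (1::complex) (card S))" .
  moreover have "ip W E = ip (W - X) E + (\<Sum>S\<in>?g ` ?P. monom (1::complex) (card S))"
    unfolding ip_def split using finA finP disj by (subst sum.union_disjoint) auto
  ultimately show ?thesis by simp
qed

lemma ip_image:
  assumes inj: "inj_on f W"
  shows "ip (f ` W) E = ip W (\<lambda>x y. E (f x) (f y))"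
proof -
  have eq: "{S. indep_set (f ` W) E S} = (\<lambda>S. f ` S) ` {S. indep_set W (\<lambda>x y. E (f x) (f y)) S}"
  proof (intro equalityI subsetI)
    fix T assume T: "T \<in> {S. indep_set (f ` W) E S}"
    let ?S = "W \<inter> f -` T"
    have "T = f ` ?S" using T by (auto simp: indep_set_def)
    moreover have "indep_set W (\<lambda>x y. E (f x) (f y)) ?S" using T by (auto simp: indep_set_def)
    ultimately show "T \<in> (\<lambda>S. f ` S) ` {S. indep_set W (\<lambda>x y. E (f x) (f y)) S}" by blast
  qed (auto simp: indep_set_def)
  have inj2: "inj_on (\<lambda>S. f ` S) {S. indep_set W (\<lambda>x y. E (f x) (f y)) S}"
    by (rule inj_on_subset[OF inj_on_image_Pow[OF inj]]) (auto simp: indep_set_def)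
  have card: "card (f ` S) = card S" if "indep_set W (\<lambda>x y. E (f x) (f y)) S" for S
    using that inj by (intro card_image) (auto simp: indep_set_def intro: inj_on_subset)
  show ?thesis unfolding ip_def eq using inj2 card by (simp add: sum.reindex)
qed

lemma ip_lex_aux:
  assumes finW: "finite W" and irr: "\<And>x. \<not> E x x" and finV: "finite V'"
  shows "ip ((\<lambda>(u, xs). u # xs) ` (V' \<times> W)) (lex_adj E) = pcompose (ip V' E) (ip W (lex_adj E) - 1)"
  using finV
proof (induction "card V'" arbitrary: V' rule: less_induct)
  case less
  let ?F = "\<lambda>A. (\<lambda>(u, xs). u # xs) ` (A \<times> W)"
  let ?Q = "ip W (lex_adj E) - 1"
  show ?case
  proof (cases "V' = {}")
    case True then show ?thesis by (simp add: one_pCons pcompose_pCons)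
  next
    case False
    then obtain v where v: "v \<in> V'" by auto
    define Nv where "Nv = {u \<in> V' - {v}. E v u \<or> E u v}"
    have base: "ip V' E = ip (V' - {v}) E + (ip {v} E - 1) * ip (V' - {v} - Nv) E"
      by (rule ip_module) (use less.prems v in \<open>auto simp: Nv_def\<close>)
    have X1: "ip {v} E - 1 = [:0, 1:]" using irr by (simp add: ip_single one_pCons)
    have finF: "finite (?F V')" using less.prems finW by auto
    have lex: "ip (?F V') (lex_adj E) = ip (?F V' - Cons v ` W) (lex_adj E)
       + (ip (Cons v ` W) (lex_adj E) - 1) * ip (?F V' - Cons v ` W - ?F Nv) (lex_adj E)"
    proof (rule ip_module[OF finF])
      show "Cons v ` W \<subseteq> ?F V'" using v by auto
      show "?F Nv \<subseteq> ?F V' - Cons v ` W" by (auto simp: Nv_def)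
      fix x y assume x: "x \<in> Cons v ` W" and y: "y \<in> ?F V' - Cons v ` W"
      then obtain xs u ys where xy: "x = v # xs" "y = u # ys" "u \<in> V'" "ys \<in> W" "u \<noteq> v" by auto
      show "(lex_adj E x y \<or> lex_adj E y x) \<longleftrightarrow> y \<in> ?F Nv"
        using xy by (auto simp: Nv_def)
    qed
    have e1: "?F V' - Cons v ` W = ?F (V' - {v})" by auto
    have e2: "?F (V' - {v}) - ?F Nv = ?F (V' - {v} - Nv)" by (auto simp: Nv_def)
    have e3: "ip (Cons v ` W) (lex_adj E) = ip W (lex_adj E)"
      by (subst ip_image) (auto simp: irr)
    have c1: "card (V' - {v}) < card V'" using v less.prems by (meson card_Diff1_less)
    have c2: "card (V' - {v} - Nv) < card V'" using v less.prems
      by (meson Diff_subset card_Diff1_less card_mono finite_Diff le_less_trans)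
    have IH1: "ip (?F (V' - {v})) (lex_adj E) = pcompose (ip (V' - {v}) E) ?Q"
      using less.hyps[OF c1] less.prems by auto
    have IH2: "ip (?F (V' - {v} - Nv)) (lex_adj E) = pcompose (ip (V' - {v} - Nv) E) ?Q"
      using less.hyps[OF c2] less.prems by auto
    show ?thesis
      unfolding lex e1 e2 e3 IH1 IH2 base X1
      by (simp add: pcompose_add pcompose_mult pcompose_pCons)
  qed
qed

lemma lex_pow_V_Suc: "lex_pow_V V (Suc m) = (\<lambda>(u, xs). u # xs) ` (V \<times> lex_pow_V V m)"
proof (intro equalityI subsetI)
  fix xs assume "xs \<in> lex_pow_V V (Suc m)"
  then show "xs \<in> (\<lambda>(u, xs). u # xs) ` (V \<times> lex_pow_V V m)"
    by (cases xs) (auto simp: lex_pow_V_def)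
qed (auto simp: lex_pow_V_def)

lemma lex_pow_V_0: "lex_pow_V V 0 = {[]}"
  by (auto simp: lex_pow_V_def)

lemma finite_lex_pow_V: "finite V \<Longrightarrow> finite (lex_pow_V V m)"
  unfolding lex_pow_V_def using finite_lists_length_eq[of V m] by (simp add: conj_commute)

lemma ip_lex_Suc:
  assumes "finite V" "\<And>x. \<not> E x x"
  shows "ip (lex_pow_V V (Suc m)) (lex_adj E) = pcompose (ip V E) (ip (lex_pow_V V m) (lex_adj E) - 1)"
  unfolding lex_pow_V_Suc using assms by (intro ip_lex_aux finite_lex_pow_V)

lemma ip_lex_0: "ip (lex_pow_V V 0) (lex_adj E) = [:1, 1:]"
  unfolding lex_pow_V_0 by (rule ip_single) simp

lemma poly_ip_lex:
  assumes "finite V" "\<And>x. \<not> E x x"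
  shows "poly (ip (lex_pow_V V m) (lex_adj E)) z - 1 = ((\<lambda>w. poly (ip V E) w - 1) ^^ m) z"
proof (induction m)
  case 0 then show ?case by (simp add: ip_lex_0)
next
  case (Suc m) then show ?case by (simp add: ip_lex_Suc[OF assms] poly_pcompose)
qed

lemma coeff_ip:
  assumes "finite V"
  shows "coeff (ip V E) i = of_nat (card {S. indep_set V E S \<and> card S = i})"
proof -
  have "coeff (ip V E) i = (\<Sum>S\<in>{S. indep_set V E S}. if card S = i then 1 else 0)"
    by (simp add: ip_def coeff_sum coeff_monom eq_commute)
  also have "\<dots> = of_nat (card {S \<in> {S. indep_set V E S}. card S = i})"
    using finite_indeps[OF assms] by (simp add: sum.If_cases Int_def)
  finally show ?thesis by simp
qed

lemma indep_card_le:
  assumes "finite V" "indep_set V E S"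
  shows "card S \<le> indep_number V E"
  unfolding indep_number_def using assms finite_indeps[OF assms(1)]
  by (intro Max_ge) auto

lemma indep_number_attained:
  assumes "finite V"
  shows "\<exists>S. indep_set V E S \<and> card S = indep_number V E"
proof -
  have "indep_number V E \<in> card ` {S. indep_set V E S}"
    unfolding indep_number_def using finite_indeps[OF assms]
    by (intro Max_in) (auto intro: indep_empty)
  then show ?thesis by auto
qed

lemma degree_ip:
  assumes "finite V"
  shows "degree (ip V E) = indep_number V E"
proof (rule antisym)
  show "degree (ip V E) \<le> indep_number V E"
  proof (rule degree_le, intro allI impI)
    fix i assume i: "indep_number V E < i"
    have emp: "{S. indep_set V E S \<and> card S = i} = {}"
      using indep_card_le[OF assms] i by fastforce
    show "coeff (ip V E) i = 0" unfolding coeff_ip[OF assms] emp by simp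
  qed
  obtain S where S: "indep_set V E S" "card S = indep_number V E"
    using indep_number_attained[OF assms] by blast
  have "finite {S. indep_set V E S \<and> card S = indep_number V E}"
    using finite_indeps[OF assms] by (rule finite_subset[rotated]) auto
  then have "card {S. indep_set V E S \<and> card S = indep_number V E} \<noteq> 0"
    using S by (subst card_0_eq) auto
  then have "coeff (ip V E) (indep_number V E) \<noteq> 0" by (simp add: coeff_ip[OF assms])
  then show "indep_number V E \<le> degree (ip V E)" by (rule le_degree)
qed

lemma indep_poly_ip:
  assumes "finite V"
  shows "indep_poly V E z = poly (ip V E) z"
proof -
  have "poly (ip V E) z = (\<Sum>i\<le>degree (ip V E). coeff (ip V E) i * z ^ i)"
    by (rule poly_altdef)
  then show ?thesis
    by (simp add: indep_poly_def degree_ip[OF assms] coeff_ip[OF assms])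
qed


lemma exp_sum_gt2:
  fixes y :: real assumes "y \<noteq> 0" shows "2 < exp y + exp (- y)"
proof -
  have "exp y \<noteq> 1" using assms by simp
  then have "0 < (exp y - 1)^2" by simp
  then have "2 * exp y < exp y * exp y + 1" by (simp add: power2_eq_square algebra_simps)
  then have "2 < exp y + 1 / exp y" by (simp add: field_simps)
  then show ?thesis by (simp add: exp_minus inverse_eq_divide)
qed

lemma cos_real_bounded_imp_real:
  fixes u :: complex
  assumes "cos u = of_real c" "\<bar>c\<bar> \<le> 1"
  shows "Im u = 0"
proof (rule ccontr)
  assume ne: "Im u \<noteq> 0"
  have "Im (cos u) = 0" using assms by simp
  then have "sin (Re u) * (exp (- Im u) - exp (Im u)) = 0" by (simp add: Im_cos)
  moreover have "exp (- Im u) \<noteq> exp (Im u)" using ne by simp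
  ultimately have "sin (Re u) = 0" by simp
  then have "cos (Re u)^2 = 1" using sin_cos_squared_add[of "Re u"] by simp
  then have ca: "\<bar>cos (Re u)\<bar> = 1" by (metis abs_1 abs_neg_one power2_eq_1_iff)
  have "c = Re (cos u)" using assms by simp
  also have "\<dots> = cos (Re u) * (exp (Im u) + exp (- Im u)) / 2" by (simp add: Re_cos)
  finally have cX: "c = cos (Re u) * (exp (Im u) + exp (- Im u)) / 2" .
  have Xp: "\<bar>exp (Im u) + exp (- Im u)\<bar> = exp (Im u) + exp (- Im u)"
    by (intro abs_of_pos add_pos_pos) auto
  have "\<bar>c\<bar> = \<bar>cos (Re u)\<bar> * \<bar>exp (Im u) + exp (- Im u)\<bar> / 2"
    using arg_cong[OF cX, of abs] by (simp add: abs_mult)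
  then have "\<bar>c\<bar> = (exp (Im u) + exp (- Im u)) / 2" using ca Xp by simp
  moreover have "2 < exp (Im u) + exp (- Im u)" using ne by (rule exp_sum_gt2)
  ultimately show False using assms(2) by simp
qed

lemma cos_lipschitz: "\<bar>cos a - cos b\<bar> \<le> \<bar>a - b\<bar>" for a b :: real
proof -
  have "\<bar>cos a - cos b\<bar> = 2 * \<bar>sin ((a + b) / 2)\<bar> * \<bar>sin ((b - a) / 2)\<bar>"
    by (simp add: cos_diff_cos abs_mult)
  also have "\<dots> \<le> 2 * 1 * \<bar>(b - a) / 2\<bar>"
    by (intro mult_mono abs_sin_x_le_abs_x) auto
  finally show ?thesis by simp
qed

lemma cos4: "cos (4 * t) = 8 * cos t ^ 4 - 8 * cos t ^ 2 + 1" for t :: complex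
proof -
  have e: "4 * t = 2 * (2 * t)" by simp
  have "cos (4 * t) = 2 * (cos (2 * t))^2 - 1" unfolding e by (rule cos_double_cos)
  also have "cos (2 * t) = 2 * cos t ^ 2 - 1" by (rule cos_double_cos)
  finally show ?thesis by (simp add: power2_eq_square power4_eq_xxxx algebra_simps)
qed


lemma roots_lex_eq:
  assumes finV: "finite V" and irr: "\<And>x. \<not> E x x"
  shows "indep_roots (lex_pow_V V m) (lex_adj E) = {z. ((\<lambda>w. poly (ip V E) w - 1) ^^ m) z = -1}"
proof -
  have "z \<in> indep_roots (lex_pow_V V m) (lex_adj E) \<longleftrightarrow> ((\<lambda>w. poly (ip V E) w - 1) ^^ m) z = -1" for z
  proof -
    have "z \<in> indep_roots (lex_pow_V V m) (lex_adj E) \<longleftrightarrow> poly (ip (lex_pow_V V m) (lex_adj E)) z = 0"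
      by (simp add: indep_roots_def indep_poly_ip[OF finite_lex_pow_V[OF finV]])
    also have "\<dots> \<longleftrightarrow> poly (ip (lex_pow_V V m) (lex_adj E)) z - 1 = -1" by auto
    also have "\<dots> \<longleftrightarrow> ((\<lambda>w. poly (ip V E) w - 1) ^^ m) z = -1"
      by (simp only: poly_ip_lex[OF finV irr])
    finally show ?thesis .
  qed
  then show ?thesis by blast
qed

context
  fixes \<kappa> :: real
  assumes kpos: "0 < \<kappa>" and kle: "\<kappa> \<le> 4"
begin

definition "fch (w::complex) = 16 * w * (1 + of_real \<kappa> * w / 2)^2 * (1 + of_real \<kappa> * w / 4)"
definition "phi (t::complex) = (2 / of_real \<kappa>) * (cos t - 1)"

lemma fch_phi: "fch (phi t) = phi (4 * t)"
proof -
  have k0: "complex_of_real \<kappa> \<noteq> 0" using kpos by simp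
  have h1: "1 + of_real \<kappa> * phi t / 2 = cos t" using k0 by (simp add: phi_def field_simps)
  have h2: "1 + of_real \<kappa> * phi t / 4 = (1 + cos t) / 2" using k0 by (simp add: phi_def field_simps)
  have "fch (phi t) = 16 * phi t * (cos t)^2 * ((1 + cos t) / 2)" unfolding fch_def h1 h2 by simp
  also have "\<dots> = (2 / of_real \<kappa>) * (8 * cos t ^ 4 - 8 * cos t ^ 2)"
    unfolding phi_def using k0 by (simp add: field_simps power2_eq_square power4_eq_xxxx)
  also have "\<dots> = phi (4 * t)" unfolding phi_def cos4 by simp
  finally show ?thesis .
qed

lemma fch_iter_phi: "(fch ^^ m) (phi t) = phi (4 ^ m * t)"
  by (induction m) (simp_all add: fch_phi mult.assoc)

lemma phi_real: "phi (of_real t) = of_real ((2 / \<kappa>) * (cos t - 1))"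
  by (simp add: phi_def cos_of_real)

lemma phi_surj: "phi (Arccos (1 + of_real \<kappa> * z / 2)) = z"
  using kpos by (simp add: phi_def field_simps)

definition "Sk = closed_segment (complex_of_real (- 4 / \<kappa>)) 0"

lemma Sk_eq: "Sk = of_real ` {-4/\<kappa>..0}"
  unfolding Sk_def using kpos
  by (metis closed_segment_eq_real_ivl1 closed_segment_of_real divide_nonpos_pos
      neg_le_0_iff_le of_real_0 zero_le_numeral less_imp_le)

lemma roots_in_Sk:
  assumes "(fch ^^ m) z = -1"
  shows "z \<in> Sk"
proof -
  define t where "t = Arccos (1 + of_real \<kappa> * z / 2)"
  have zt: "z = phi t" unfolding t_def by (rule phi_surj[symmetric])
  define N :: complex where "N = 4 ^ m"
  have "phi (N * t) = -1" using assms zt fch_iter_phi N_def by simp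
  then have "cos (N * t) = of_real (1 - \<kappa> / 2)"
    using kpos by (simp add: phi_def field_simps)
  moreover have "\<bar>1 - \<kappa> / 2\<bar> \<le> 1" using kpos kle by auto
  ultimately have "Im (N * t) = 0" by (rule cos_real_bounded_imp_real)
  moreover have "N = of_real (4 ^ m)" by (simp add: N_def)
  ultimately have "Im t = 0" by simp
  then have "t = of_real (Re t)" by (simp add: complex_eq_iff)
  then have "z = of_real ((2 / \<kappa>) * (cos (Re t) - 1))" using zt phi_real by metis
  moreover have "(2 / \<kappa>) * (cos (Re t) - 1) \<in> {-4/\<kappa>..0}"
  proof -
    have "-1 \<le> cos (Re t)" "cos (Re t) \<le> 1" by auto
    then show ?thesis using kpos by (auto simp: field_simps)
  qed
  ultimately show ?thesis unfolding Sk_eq by blast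
qed

definition "theta = arccos (1 - \<kappa> / 2)"

lemma root_at:
  "(fch ^^ m) (of_real ((2 / \<kappa>) * (cos ((theta + 2 * pi * of_int j) / 4 ^ m) - 1))) = -1"
proof -
  have "(fch ^^ m) (of_real ((2 / \<kappa>) * (cos ((theta + 2 * pi * of_int j) / 4 ^ m) - 1)))
      = (fch ^^ m) (phi (of_real ((theta + 2 * pi * of_int j) / 4 ^ m)))"
    by (simp only: phi_real)
  also have "\<dots> = phi (4 ^ m * of_real ((theta + 2 * pi * of_int j) / 4 ^ m))"
    by (rule fch_iter_phi)
  also have "(4::complex) ^ m * complex_of_real ((theta + 2 * pi * of_int j) / 4 ^ m)
      = of_real (4 ^ m * ((theta + 2 * pi * of_int j) / 4 ^ m))"
    by (simp only: of_real_mult of_real_power of_real_numeral)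
  also have "4 ^ m * ((theta + 2 * pi * of_int j) / 4 ^ m) = theta + 2 * pi * of_int j" by simp
  also have "phi (of_real (theta + 2 * pi * of_int j)) = of_real ((2 / \<kappa>) * (cos theta - 1))"
    unfolding phi_real by (simp add: cos_add)
  also have "cos theta = 1 - \<kappa> / 2" unfolding theta_def using kpos kle by (intro cos_arccos) auto
  finally show ?thesis using kpos by simp
qed

lemma dense_roots:
  assumes s: "s \<in> {-4/\<kappa>..0}"
  shows "\<exists>r. (fch ^^ m) r = -1 \<and> dist (of_real s) r \<le> 4 * pi / (\<kappa> * 4 ^ m)"
proof -
  define N :: real where "N = 4 ^ m"
  have Npos: "N > 0" by (simp add: N_def)
  define t0 where "t0 = arccos (1 + \<kappa> * s / 2)"
  have "\<kappa> * s \<le> 0" using kpos s by (simp add: mult_nonneg_nonpos)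
  then have "-1 \<le> 1 + \<kappa> * s / 2" "1 + \<kappa> * s / 2 \<le> 1" using s kpos by (auto simp: field_simps)
  then have ct0: "cos t0 = 1 + \<kappa> * s / 2" unfolding t0_def by (rule cos_arccos)
  define j where "j = \<lfloor>(N * t0 - theta) / (2 * pi)\<rfloor>"
  have j1: "of_int j \<le> (N * t0 - theta) / (2 * pi)" "(N * t0 - theta) / (2 * pi) < of_int j + 1"
    unfolding j_def by linarith+
  have p2: "0 < 2 * pi" using pi_gt_zero by simp
  have j2: "2 * pi * of_int j \<le> N * t0 - theta"
    using j1(1) p2 by (simp add: pos_le_divide_eq mult.commute)
  have j3: "N * t0 - theta < 2 * pi * (of_int j + 1)"
    using j1(2) p2 by (simp add: pos_divide_less_eq mult.commute)
  define tj where "tj = (theta + 2 * pi * of_int j) / N"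
  have Ntj: "N * tj = theta + 2 * pi * of_int j" using Npos by (simp add: tj_def)
  have "\<bar>N * t0 - N * tj\<bar> \<le> 2 * pi" unfolding Ntj using j2 j3 by (simp add: abs_le_iff algebra_simps)
  then have "N * \<bar>t0 - tj\<bar> \<le> 2 * pi" using Npos
    by (metis abs_of_pos abs_mult right_diff_distrib)
  then have dt: "\<bar>t0 - tj\<bar> \<le> 2 * pi / N" using Npos by (simp add: pos_le_divide_eq mult.commute)
  define rr where "rr = (2 / \<kappa>) * (cos tj - 1)"
  have root: "(fch ^^ m) (of_real rr) = -1" unfolding rr_def tj_def N_def by (rule root_at)
  have "s = (2 / \<kappa>) * (cos t0 - 1)" using ct0 kpos by (simp add: field_simps)
  then have srr: "s - rr = (2 / \<kappa>) * (cos t0 - cos tj)" by (simp add: rr_def right_diff_distrib)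
  have "dist (complex_of_real s) (of_real rr) = \<bar>s - rr\<bar>"
    by (simp add: dist_norm flip: of_real_diff)
  also have "\<dots> = (2 / \<kappa>) * \<bar>cos t0 - cos tj\<bar>" unfolding srr abs_mult using kpos by simp
  also have "\<dots> \<le> (2 / \<kappa>) * (2 * pi / N)"
    using kpos cos_lipschitz[of t0 tj] dt by (intro mult_left_mono) auto
  also have "\<dots> = 4 * pi / (\<kappa> * 4 ^ m)" by (simp add: N_def)
  finally show ?thesis using root by blast
qed


lemma attractor_of_cheb:
  assumes finV: "finite V" and irr: "\<And>x. \<not> E x x"
    and hf: "\<And>w. poly (ip V E) w - 1 = fch w"
  shows "indep_attractor_is V E Sk"
proof -
  have g: "(\<lambda>w. poly (ip V E) w - 1) = fch" using hf by (rule ext)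
  define R where "R m = indep_roots (lex_pow_V V m) (lex_adj E)" for m
  have R: "R m = {z. (fch ^^ m) z = -1}" for m
    unfolding R_def roots_lex_eq[OF finV irr] g ..
  have RS: "R m \<subseteq> Sk" for m using roots_in_Sk unfolding R by blast
  have Rne: "R m \<noteq> {}" for m using root_at[of m 0] unfolding R by blast
  have Sne: "Sk \<noteq> {}" unfolding Sk_def by auto
  define B where "B m = 4 * pi / (\<kappa> * 4 ^ m)" for m :: nat
  have Bnn: "0 \<le> B m" for m using kpos by (simp add: B_def)
  have inf_le: "infdist b (R m) \<le> B m" if bS: "b \<in> Sk" for b m
  proof -
    obtain s where s: "s \<in> {-4/\<kappa>..0}" "b = of_real s" using bS unfolding Sk_eq by blast
    obtain r where "(fch ^^ m) r = -1" "dist (of_real s) r \<le> B m"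
      using dense_roots[OF s(1), of m] unfolding B_def by blast
    then show ?thesis using s(2) unfolding R by (intro infdist_le2) auto
  qed
  have hd: "0 \<le> hausdorff_dist (R m) Sk \<and> hausdorff_dist (R m) Sk \<le> B m" for m
  proof -
    have "(SUP a\<in>R m. infdist a Sk) = (SUP a\<in>R m. (0::real))"
      using RS by (intro SUP_cong) (auto intro: infdist_zero)
    also have "\<dots> = 0" using Rne by (rule cSUP_const)
    finally have s1: "(SUP a\<in>R m. infdist a Sk) = 0" .
    have s2: "(SUP b\<in>Sk. infdist b (R m)) \<le> B m"
      using Sne inf_le by (intro cSUP_least) auto
    show ?thesis unfolding hausdorff_dist_def s1 using s2 Bnn by auto
  qed
  have B0: "B \<longlonglongrightarrow> 0"
  proof -
    have "(\<lambda>m. (4 * pi / \<kappa>) * inverse ((4::real) ^ m)) \<longlonglongrightarrow> (4 * pi / \<kappa>) * 0"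
      by (intro tendsto_mult tendsto_const LIMSEQ_inverse_realpow_zero) simp
    moreover have "(\<lambda>m. (4 * pi / \<kappa>) * inverse ((4::real) ^ m)) = B"
      by (rule ext) (simp add: B_def field_simps)
    ultimately show ?thesis by simp
  qed
  have "(\<lambda>m. hausdorff_dist (R m) Sk) \<longlonglongrightarrow> 0"
    by (rule tendsto_sandwich[of "\<lambda>_. 0" _ _ B]) (use hd B0 in auto)
  moreover have "compact Sk" unfolding Sk_def by (rule compact_segment)
  ultimately show ?thesis
    unfolding indep_attractor_is_def R_def[symmetric] using Sne Rne by auto
qed

end


datatype cg = Vx | CU cg cg | CJ cg cg

fun cverts :: "cg \<Rightarrow> nat set" where
  "cverts Vx = {0}"
| "cverts (CU a b) = (\<lambda>x. 2 * x) ` cverts a \<union> (\<lambda>x. 2 * x + 1) ` cverts b"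
| "cverts (CJ a b) = (\<lambda>x. 2 * x) ` cverts a \<union> (\<lambda>x. 2 * x + 1) ` cverts b"

fun cadj :: "cg \<Rightarrow> nat \<Rightarrow> nat \<Rightarrow> bool" where
  "cadj Vx x y = False"
| "cadj (CU a b) x y = ((even x \<and> even y \<and> cadj a (x div 2) (y div 2)) \<or>
                      (odd x \<and> odd y \<and> cadj b (x div 2) (y div 2)))"
| "cadj (CJ a b) x y = ((even x \<and> even y \<and> cadj a (x div 2) (y div 2)) \<or>
                      (odd x \<and> odd y \<and> cadj b (x div 2) (y div 2)) \<or>
                      (x \<in> cverts (CJ a b) \<and> y \<in> cverts (CJ a b) \<and> even x \<noteq> even y))"

fun cpoly :: "cg \<Rightarrow> complex poly" where
  "cpoly Vx = [:1, 1:]"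
| "cpoly (CU a b) = cpoly a * cpoly b"
| "cpoly (CJ a b) = cpoly a + cpoly b - 1"

lemma cverts_finite: "finite (cverts t)"
  by (induction t) auto

lemma cadj_in: "cadj t x y \<Longrightarrow> x \<in> cverts t \<and> y \<in> cverts t"
proof (induction t arbitrary: x y)
  case Vx then show ?case by simp
next
  case (CU a b)
  then show ?case
    by (auto simp: image_iff elim!: evenE oddE)
next
  case (CJ a b)
  then show ?case
    by (auto simp: image_iff elim!: evenE oddE)
qed

lemma cadj_irr: "\<not> cadj t x x"
  by (induction t arbitrary: x) auto

lemma cadj_sym: "cadj t x y \<Longrightarrow> cadj t y x"
  by (induction t arbitrary: x y) auto

lemma cg_simple: "simple_graph (cverts t) (cadj t)"
  unfolding simple_graph_def using cverts_finite cadj_in cadj_irr cadj_sym by blast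

lemma ip_cg: "ip (cverts t) (cadj t) = cpoly t"
proof (induction t)
  case Vx
  then show ?case by (simp add: ip_single)
next
  case (CU a b)
  let ?A = "(\<lambda>x. 2 * x) ` cverts a" and ?B = "(\<lambda>x. 2 * x + 1) ` cverts b"
  have AB: "cverts (CU a b) - ?A = ?B" by auto presburger
  have m0: "ip (cverts (CU a b)) (cadj (CU a b)) = ip (cverts (CU a b) - ?A) (cadj (CU a b))
      + (ip ?A (cadj (CU a b)) - 1) * ip (cverts (CU a b) - ?A - {}) (cadj (CU a b))"
    by (rule ip_module) (auto simp: cverts_finite)
  have hA: "ip ?A (cadj (CU a b)) = ip (cverts a) (cadj a)"
    by (subst ip_image) (auto simp: inj_on_def)
  have hB: "ip ?B (cadj (CU a b)) = ip (cverts b) (cadj b)"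
    by (subst ip_image) (auto simp: inj_on_def)
  have m1: "ip (cverts (CU a b)) (cadj (CU a b)) = ip ?B (cadj (CU a b)) + (ip ?A (cadj (CU a b)) - 1) * ip ?B (cadj (CU a b))"
    using m0 by (simp only: AB Diff_empty)
  show ?case unfolding m1 hA hB CU.IH cpoly.simps by (simp add: algebra_simps)
next
  case (CJ a b)
  let ?A = "(\<lambda>x. 2 * x) ` cverts a" and ?B = "(\<lambda>x. 2 * x + 1) ` cverts b"
  have AB: "cverts (CJ a b) - ?A = ?B" by auto presburger
  have m0: "ip (cverts (CJ a b)) (cadj (CJ a b)) = ip (cverts (CJ a b) - ?A) (cadj (CJ a b))
      + (ip ?A (cadj (CJ a b)) - 1) * ip (cverts (CJ a b) - ?A - ?B) (cadj (CJ a b))"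
    by (rule ip_module) (auto simp: cverts_finite, presburger+)
  have hA: "ip ?A (cadj (CJ a b)) = ip (cverts a) (cadj a)"
    by (subst ip_image) (auto simp: inj_on_def)
  have hB: "ip ?B (cadj (CJ a b)) = ip (cverts b) (cadj b)"
    by (subst ip_image) (auto simp: inj_on_def)
  have e0: "cverts (CJ a b) - ?A - ?B = {}" by auto
  have m1: "ip (cverts (CJ a b)) (cadj (CJ a b)) = ip ?B (cadj (CJ a b)) + (ip ?A (cadj (CJ a b)) - 1) * ip {} (cadj (CJ a b))"
    using m0 by (simp only: AB Diff_cancel)
  show ?case unfolding m1 hA hB CJ.IH cpoly.simps ip_empty by (simp add: algebra_simps)
qed

definition "G1 = (CJ Vx (CJ Vx (CU Vx (CJ Vx (CJ Vx (CJ Vx (CJ Vx (CJ Vx (CJ Vx (CU Vx (CJ Vx (CJ Vx (CJ Vx (CJ Vx (CU Vx Vx)))))))))))))))"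
definition "G2 = (CJ Vx (CU (CJ Vx Vx) (CJ Vx (CJ Vx (CU Vx (CJ Vx (CJ Vx (CJ Vx (CJ Vx (CJ Vx (CU Vx (CJ Vx (CJ Vx (CJ Vx Vx))))))))))))))"
definition "G3 = (CU Vx (CU (CJ Vx (CJ Vx Vx)) (CJ Vx (CJ Vx (CU Vx (CJ Vx (CJ Vx (CJ Vx (CJ Vx (CJ Vx (CJ Vx (CJ Vx (CJ Vx Vx)))))))))))))"
definition "G4 = (CU (CJ Vx (CJ Vx (CU (CJ Vx Vx) (CJ Vx (CJ Vx (CJ Vx Vx)))))) (CJ Vx (CJ Vx (CU (CJ Vx Vx) (CJ Vx (CJ Vx (CJ Vx Vx)))))))"

lemma cp1: "cpoly G1 = [:1, 16, 20, 8, 1:]" by (simp add: G1_def one_pCons)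
lemma cp2: "cpoly G2 = [:1, 16, 40, 32, 8:]" by (simp add: G2_def one_pCons)
lemma cp3: "cpoly G3 = [:1, 16, 60, 72, 27:]" by (simp add: G3_def one_pCons)
lemma cp4: "cpoly G4 = [:1, 16, 80, 128, 64:]" by (simp add: G4_def one_pCons)


lemma infdist_lessE:
  assumes "A \<noteq> {}" "infdist x A < e"
  obtains a where "a \<in> A" "dist x a < e"
proof -
  have "(INF a\<in>A. dist x a) < e" using assms by (simp add: infdist_notempty)
  then show ?thesis using that assms(1) by (subst (asm) cINF_less_iff) (auto intro: bdd_belowI[of _ 0])
qed

lemma poly_split_roots:
  fixes q :: "complex poly"
  shows "degree q = d \<Longrightarrow> \<exists>rs. length rs = d \<and> q = smult (lead_coeff q) (\<Prod>r\<leftarrow>rs. [:-r, 1:])"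
proof (induction d arbitrary: q)
  case 0
  then obtain c where "q = [:c:]" by (metis degree_eq_zeroE)
  then show ?case by auto
next
  case (Suc n)
  then have "\<not> constant (poly q)" by (simp add: constant_degree)
  then obtain r where r: "poly q r = 0" using fundamental_theorem_of_algebra by blast
  then obtain q' where q': "q = [:-r, 1:] * q'" by (metis dvdE poly_eq_0_iff_dvd)
  have "q' \<noteq> 0" using q' Suc.prems by auto
  have "degree q = degree [:-r, 1:] + degree q'" unfolding q' using \<open>q' \<noteq> 0\<close>
    by (intro degree_mult_eq) auto
  then have dq': "degree q' = n" using Suc.prems by simp
  then obtain rs where rs: "length rs = n" "q' = smult (lead_coeff q') (\<Prod>r\<leftarrow>rs. [:-r, 1:])"
    using Suc.IH by blast
  have "lead_coeff q = lead_coeff [:-r, 1:] * lead_coeff q'" unfolding q' by (rule lead_coeff_mult)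
  then have "lead_coeff q = lead_coeff q'" by simp
  note lq = this
  from q' rs(2) have "q = [:-r, 1:] * smult (lead_coeff q') (\<Prod>r\<leftarrow>rs. [:-r, 1:])" by metis
  also have "\<dots> = smult (lead_coeff q') ([:-r, 1:] * (\<Prod>r\<leftarrow>rs. [:-r, 1:]))" by (rule mult_smult_right)
  also have "[:-r, 1:] * (\<Prod>r\<leftarrow>rs. [:-r, 1:]) = (\<Prod>r\<leftarrow>r # rs. [:-r, 1:])" by simp
  finally have "q = smult (lead_coeff q') (\<Prod>r\<leftarrow>r # rs. [:-r, 1:])" .
  then have "q = smult (lead_coeff q) (\<Prod>r\<leftarrow>r # rs. [:-r, 1:])" unfolding lq .
  then show ?case using rs(1) by (intro exI[of _ "r # rs"]) auto
qed

lemma prod_list_ge_pow: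
  fixes g :: "'b \<Rightarrow> real"
  assumes "0 \<le> \<rho>" "\<And>r. r \<in> set rs \<Longrightarrow> \<rho> \<le> g r"
  shows "\<rho> ^ length rs \<le> (\<Prod>r\<leftarrow>rs. g r)"
  using assms(2)
proof (induction rs)
  case Nil then show ?case by simp
next
  case (Cons a rs)
  have ga: "\<rho> \<le> g a" using Cons.prems by simp
  have IH: "\<rho> ^ length rs \<le> (\<Prod>r\<leftarrow>rs. g r)" using Cons by simp
  have "\<rho> * \<rho> ^ length rs \<le> g a * (\<Prod>r\<leftarrow>rs. g r)"
    using assms(1) ga IH by (intro mult_mono) auto
  then show ?case by simp
qed

lemma poly_prod_linear: "poly (\<Prod>r\<leftarrow>rs. [:-r, 1:]) z = (\<Prod>r\<leftarrow>rs. z - r)"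
  for z :: "'b::comm_ring_1"
  by (induction rs) (auto simp: algebra_simps)

lemma norm_prod_list_c: "norm (\<Prod>r\<leftarrow>rs. g r) = (\<Prod>r\<leftarrow>rs. norm (g r :: complex))"
  by (induction rs) (auto simp: norm_mult)

lemma root_near:
  fixes q :: "complex poly"
  assumes d: "degree q \<ge> 1"
  shows "\<exists>\<zeta>. poly q \<zeta> = 0 \<and> norm (z - \<zeta>) ^ degree q * norm (lead_coeff q) \<le> norm (poly q z)"
proof -
  obtain rs where rs: "length rs = degree q" "q = smult (lead_coeff q) (\<Prod>r\<leftarrow>rs. [:-r, 1:])"
    using poly_split_roots by blast
  have ne: "rs \<noteq> []" using rs(1) d by auto
  define \<mu> where "\<mu> = Min ((\<lambda>r. norm (z - r)) ` set rs)"
  have "\<mu> \<in> (\<lambda>r. norm (z - r)) ` set rs" unfolding \<mu>_def using ne by (intro Min_in) auto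
  then obtain r0 where r0: "r0 \<in> set rs" "\<mu> = norm (z - r0)" by auto
  have le: "\<mu> \<le> norm (z - r)" if "r \<in> set rs" for r unfolding \<mu>_def using that by (intro Min_le) auto
  have pz: "poly q z = lead_coeff q * (\<Prod>r\<leftarrow>rs. z - r)"
    by (subst rs(2)) (simp add: poly_prod_linear)
  have "norm (poly q z) = norm (lead_coeff q) * (\<Prod>r\<leftarrow>rs. norm (z - r))"
    unfolding pz by (simp add: norm_mult norm_prod_list_c)
  moreover have "\<mu> ^ length rs \<le> (\<Prod>r\<leftarrow>rs. norm (z - r))"
    using le r0 by (intro prod_list_ge_pow) auto
  ultimately have "\<mu> ^ degree q * norm (lead_coeff q) \<le> norm (poly q z)"
    using rs(1) by (metis mult.commute mult_left_mono norm_ge_zero)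
  moreover have "poly q r0 = 0"
    by (subst rs(2)) (use r0(1) in \<open>auto simp: poly_prod_linear prod_list_zero_iff\<close>)
  ultimately show ?thesis using r0(2) by blast
qed


lemma attractor_props:
  fixes p :: "complex poly" and R :: "nat \<Rightarrow> complex set" and S :: "complex set"
  assumes deg: "degree p \<ge> 1"
    and R: "\<And>m. R m = {z. (poly p ^^ m) z = -1}"
    and finR: "\<And>m. finite (R m)"
    and S: "compact S" "S \<noteq> {}"
    and ev: "eventually (\<lambda>m. R m \<noteq> {}) sequentially"
    and lim: "(\<lambda>m. hausdorff_dist (R m) S) \<longlonglongrightarrow> 0"
  shows "\<forall>s\<in>S. poly p s \<in> S" and "\<forall>z. poly p z \<in> S \<longrightarrow> z \<in> S"
proof -
  have clS: "closed S" using S(1) by (rule compact_imp_closed)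
  obtain B where B: "\<And>b. b \<in> S \<Longrightarrow> norm b \<le> B"
    using compact_imp_bounded[OF S(1)] unfolding bounded_iff by blast
  have key: "eventually (\<lambda>m. R m \<noteq> {} \<and> (\<forall>a\<in>R m. infdist a S < e) \<and> (\<forall>b\<in>S. infdist b (R m) < e)) sequentially"
    if e: "e > 0" for e
  proof -
    have "eventually (\<lambda>m. hausdorff_dist (R m) S < e) sequentially"
      using order_tendstoD(2)[OF lim e] .
    with ev show ?thesis
    proof eventually_elim
      case (elim m)
      then have Rne: "R m \<noteq> {}" and hd: "hausdorff_dist (R m) S < e" by auto
      have D1: "(SUP a\<in>R m. infdist a S) < e" and D2: "(SUP b\<in>S. infdist b (R m)) < e"
        using hd unfolding hausdorff_dist_def by auto
      have "infdist a S < e" if a: "a \<in> R m" for a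
      proof -
        have "infdist a S \<le> (SUP a\<in>R m. infdist a S)"
          using a finR[of m] by (intro cSUP_upper) (auto intro: bdd_above_finite)
        then show ?thesis using D1 by simp
      qed
      moreover have "infdist b (R m) < e" if b: "b \<in> S" for b
      proof -
        obtain r0 where r0: "r0 \<in> R m" using Rne by auto
        have "bdd_above ((\<lambda>b. infdist b (R m)) ` S)"
        proof (rule bdd_aboveI2)
          fix x assume "x \<in> S"
          have "infdist x (R m) \<le> dist x r0" using r0 by (rule infdist_le)
          also have "\<dots> \<le> norm x + norm r0" by (simp add: dist_norm norm_triangle_ineq4)
          also have "\<dots> \<le> B + norm r0" using B \<open>x \<in> S\<close> by simp
          finally show "infdist x (R m) \<le> B + norm r0" .
        qed
        then have "infdist b (R m) \<le> (SUP b\<in>S. infdist b (R m))"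
          using b by (intro cSUP_upper) auto
        then show ?thesis using D2 by simp
      qed
      ultimately show ?case using Rne by blast
    qed
  qed
  have step: "(poly p ^^ m) (poly p w) = -1" if "w \<in> R (Suc m)" for w m
    using that unfolding R by (simp add: funpow_swap1)
  show "\<forall>s\<in>S. poly p s \<in> S"
  proof
    fix s assume s: "s \<in> S"
    have "infdist (poly p s) S = 0"
    proof (rule ccontr)
      assume "infdist (poly p s) S \<noteq> 0"
      then have e: "infdist (poly p s) S > 0" using infdist_nonneg[of "poly p s" S] by linarith
      define e where "e = infdist (poly p s) S"
      have e2: "e / 2 > 0" using e e_def by simp
      obtain \<delta> where \<delta>: "\<delta> > 0" "\<And>w. dist w s < \<delta> \<Longrightarrow> dist (poly p w) (poly p s) < e / 2"
        using poly_isCont[where p=p and x=s] e2 unfolding continuous_at_eps_delta by blast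
      have ev2: "eventually (\<lambda>m. R m \<noteq> {} \<and> (\<forall>a\<in>R m. infdist a S < e / 2) \<and> (\<forall>b\<in>S. infdist b (R m) < e / 2)) sequentially"
        using key[OF e2] .
      have ev3: "eventually (\<lambda>m. R (Suc m) \<noteq> {} \<and> (\<forall>b\<in>S. infdist b (R (Suc m)) < \<delta>)) sequentially"
        using key[OF \<delta>(1)] eventually_sequentially_Suc[of "\<lambda>m. R m \<noteq> {} \<and> (\<forall>a\<in>R m. infdist a S < \<delta>) \<and> (\<forall>b\<in>S. infdist b (R m) < \<delta>)"]
        by (auto elim: eventually_mono)
      obtain m where m1: "\<forall>a\<in>R m. infdist a S < e / 2" and m2: "R (Suc m) \<noteq> {}" "\<forall>b\<in>S. infdist b (R (Suc m)) < \<delta>"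
        using eventually_happens'[OF sequentially_bot eventually_conj[OF ev2 ev3]] by blast
      obtain w where w: "w \<in> R (Suc m)" "dist s w < \<delta>"
        using m2 s by (meson infdist_lessE)
      have "poly p w \<in> R m" using step[OF w(1)] unfolding R by simp
      then have "infdist (poly p w) S < e / 2" using m1 by blast
      moreover have "dist (poly p s) (poly p w) < e / 2" using \<delta>(2)[of w] w(2) by (simp add: dist_commute)
      ultimately have "infdist (poly p s) S < e"
        using infdist_triangle[of "poly p s" S "poly p w"] by simp
      then show False using e_def by simp
    qed
    then show "poly p s \<in> S" using in_closure_iff_infdist_zero[OF S(2)] clS closure_closed by metis
  qed
  show "\<forall>z. poly p z \<in> S \<longrightarrow> z \<in> S"
  proof (intro allI impI)
    fix z assume c: "poly p z \<in> S"
    define lc where "lc = norm (lead_coeff p)"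
    have lc: "lc > 0" using deg unfolding lc_def by auto
    have "infdist z S = 0"
    proof (rule ccontr)
      assume "infdist z S \<noteq> 0"
      then have e: "infdist z S > 0" using infdist_nonneg[of z S] by linarith
      define e where "e = infdist z S"
      have e2: "e / 2 > 0" using e e_def by simp
      define \<delta> where "\<delta> = lc * (e / 2) ^ degree p"
      have \<delta>: "\<delta> > 0" unfolding \<delta>_def using lc e2 by simp
      have ev3: "eventually (\<lambda>m. (\<forall>a\<in>R (Suc m). infdist a S < e / 2)) sequentially"
        using key[OF e2] eventually_sequentially_Suc[of "\<lambda>m. R m \<noteq> {} \<and> (\<forall>a\<in>R m. infdist a S < e / 2) \<and> (\<forall>b\<in>S. infdist b (R m) < e / 2)"]
        by (auto elim: eventually_mono)
      obtain m where m1: "\<forall>a\<in>R (Suc m). infdist a S < e / 2" and m2: "R m \<noteq> {}" "\<forall>b\<in>S. infdist b (R m) < \<delta>"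
        using eventually_happens'[OF sequentially_bot eventually_conj[OF ev3 key[OF \<delta>]]] by blast
      obtain w where w: "w \<in> R m" "dist (poly p z) w < \<delta>"
        using m2 c by (meson infdist_lessE)
      define q where "q = p + [:-w:]"
      have dq: "degree q = degree p" unfolding q_def using deg by (subst degree_add_eq_left) auto
      have lq: "lead_coeff q = lead_coeff p" using dq deg unfolding q_def
        by (auto simp: coeff_pCons split: nat.split)
      obtain \<zeta> where \<zeta>: "poly q \<zeta> = 0" "norm (z - \<zeta>) ^ degree q * norm (lead_coeff q) \<le> norm (poly q z)"
        using root_near[of q z] dq deg by auto
      have pqz: "poly q z = poly p z - w" by (simp add: q_def)
      have lq': "coeff q (degree p) = lead_coeff p" using lq dq by simp
      have pz: "poly p \<zeta> = w" using \<zeta>(1) unfolding q_def by simp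
      have A1: "lc * norm (z - \<zeta>) ^ degree p \<le> dist (poly p z) w"
        using \<zeta>(2) unfolding lq dq pqz lc_def lq' by (simp add: dist_norm mult.commute)
      have A2: "dist (poly p z) w < lc * (e / 2) ^ degree p" using w(2) unfolding \<delta>_def .
      have "lc * norm (z - \<zeta>) ^ degree p < lc * (e / 2) ^ degree p"
        using A1 A2 by (rule le_less_trans)
      then have "norm (z - \<zeta>) ^ degree p < (e / 2) ^ degree p"
        using lc by simp
      then have zz: "norm (z - \<zeta>) < e / 2" by (rule power_less_imp_less_base) (use e2 in auto)
      have "(poly p ^^ Suc m) \<zeta> = (poly p ^^ m) (poly p \<zeta>)" by (simp only: funpow_Suc_right o_apply)
      then have "\<zeta> \<in> R (Suc m)" using w(1) pz unfolding R by simp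
      then have "infdist \<zeta> S < e / 2" using m1 by blast
      then have "infdist z S < e"
        using infdist_triangle[of z S \<zeta>] zz unfolding dist_norm by linarith
      then show False using e_def by simp
    qed
    then show "z \<in> S" using in_closure_iff_infdist_zero[OF S(2)] clS closure_closed by metis
  qed
qed


lemma sign_structure:
  fixes a L r1 r2 r3 r4 s1 s2 s3 s4 :: real
  assumes a: "a > 0"
    and rs: "r1 \<le> r2" "r2 \<le> r3" "r3 \<le> r4" and rin: "-L \<le> r1" "r4 \<le> 0"
    and ss: "s1 \<le> s2" "s2 \<le> s3" "s3 \<le> s4" and sin: "-L \<le> s1" "s4 \<le> 0"
    and hr: "\<And>x. -L \<le> x \<Longrightarrow> x \<le> 0 \<Longrightarrow> a * (((x - r1) * (x - r2)) * ((x - r3) * (x - r4))) \<le> 0"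
    and hs: "\<And>x. -L \<le> x \<Longrightarrow> x \<le> 0 \<Longrightarrow> 0 \<le> a * (((x - s1) * (x - s2)) * ((x - s3) * (x - s4)))"
    and r0: "r1 * r2 * r3 * r4 = 0"
  shows "r1 = -L \<and> r2 = r3 \<and> r4 = 0 \<and> s1 = s2 \<and> s3 = s4"
proof (intro conjI)
  show "r4 = 0"
  proof -
    have "r1 = 0 \<or> r2 = 0 \<or> r3 = 0 \<or> r4 = 0" using r0 by auto
    then show ?thesis using rs rin by auto
  qed
  show "r1 = -L"
  proof (rule ccontr)
    assume "r1 \<noteq> -L"
    then have lt: "-L < r1" using rin by simp
    define x where "x = (r1 - L) / 2"
    have x: "-L < x" "x < r1" using lt by (simp_all add: x_def)
    have "0 < (x - r1) * (x - r2)" using x rs by (intro mult_neg_neg) auto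
    moreover have "0 < (x - r3) * (x - r4)" using x rs by (intro mult_neg_neg) auto
    ultimately have "0 < a * (((x - r1) * (x - r2)) * ((x - r3) * (x - r4)))" using a by simp
    moreover have "x \<le> 0" using x rs rin by linarith
    ultimately show False using hr[of x] x by linarith
  qed
  show "r2 = r3"
  proof (rule ccontr)
    assume "r2 \<noteq> r3"
    then have lt: "r2 < r3" using rs by simp
    define x where "x = (r2 + r3) / 2"
    have x: "r2 < x" "x < r3" using lt by (simp_all add: x_def)
    have "0 < (x - r1) * (x - r2)" using x rs by (intro mult_pos_pos) auto
    moreover have "0 < (x - r3) * (x - r4)" using x rs by (intro mult_neg_neg) auto
    ultimately have "0 < a * (((x - r1) * (x - r2)) * ((x - r3) * (x - r4)))" using a by simp
    moreover have "-L \<le> x" "x \<le> 0" using x rs rin by linarith+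
    ultimately show False using hr[of x] by linarith
  qed
  show "s1 = s2"
  proof (rule ccontr)
    assume "s1 \<noteq> s2"
    then have lt: "s1 < s2" using ss by simp
    define x where "x = (s1 + s2) / 2"
    have x: "s1 < x" "x < s2" using lt by (simp_all add: x_def)
    have "(x - s1) * (x - s2) < 0" using x by (intro mult_pos_neg) auto
    moreover have "0 < (x - s3) * (x - s4)" using x ss by (intro mult_neg_neg) auto
    ultimately have "((x - s1) * (x - s2)) * ((x - s3) * (x - s4)) < 0" by (simp add: mult_neg_pos)
    then have "a * (((x - s1) * (x - s2)) * ((x - s3) * (x - s4))) < 0" using a by (simp add: mult_pos_neg)
    moreover have "-L \<le> x" "x \<le> 0" using x ss sin by linarith+
    ultimately show False using hs[of x] by linarith
  qed
  show "s3 = s4"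
  proof (rule ccontr)
    assume "s3 \<noteq> s4"
    then have lt: "s3 < s4" using ss by simp
    define x where "x = (s3 + s4) / 2"
    have x: "s3 < x" "x < s4" using lt by (simp_all add: x_def)
    have "0 < (x - s1) * (x - s2)" using x ss by (intro mult_pos_pos) auto
    moreover have "(x - s3) * (x - s4) < 0" using x by (intro mult_pos_neg) auto
    ultimately have "((x - s1) * (x - s2)) * ((x - s3) * (x - s4)) < 0" by (simp add: mult_pos_neg)
    then have "a * (((x - s1) * (x - s2)) * ((x - s3) * (x - s4))) < 0" using a by (simp add: mult_pos_neg)
    moreover have "-L \<le> x" "x \<le> 0" using x ss sin by linarith+
    ultimately show False using hs[of x] by linarith
  qed
qed

lemma cheb_alg:
  fixes a L c s1 s3 :: complex
  assumes a: "a \<noteq> 0" and L: "L \<noteq> 0"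
    and eq: "smult a ([:L, 1:] * [:-c, 1:] * [:-c, 1:] * [:0, 1:]) + [:L:]
             = smult a ([:-s1, 1:] * [:-s1, 1:] * [:-s3, 1:] * [:-s3, 1:])"
  shows "c = -L/2 \<and> a = 64 / L^3"
proof -
  have e: "coeff (smult a ([:L, 1:] * [:-c, 1:] * [:-c, 1:] * [:0, 1:]) + [:L:]) i
         = coeff (smult a ([:-s1, 1:] * [:-s1, 1:] * [:-s3, 1:] * [:-s3, 1:])) i" for i
    by (simp only: eq)
  have e0: "L = a * (s1 * s1 * s3 * s3)" using e[of 0] by (simp add: algebra_simps)
  have e1: "a * (L * c * c) = a * (- (2 * s1 * s3 * (s1 + s3)))" using e[of "Suc 0"] by (simp add: algebra_simps)
  have e2: "a * (c * c - 2 * c * L) = a * ((s1 + s3) * (s1 + s3) + 2 * s1 * s3)" using e[of "Suc (Suc 0)"] by (simp add: algebra_simps)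
  have e3: "a * (L - 2 * c) = a * (- 2 * (s1 + s3))" using e[of "Suc (Suc (Suc 0))"] by (simp add: algebra_simps)
  have f1: "L * c * c = - (2 * s1 * s3 * (s1 + s3))" using e1 a mult_left_cancel by blast
  have f2: "c * c - 2 * c * L = (s1 + s3) * (s1 + s3) + 2 * s1 * s3" using e2 a mult_left_cancel by blast
  have f3: "L - 2 * c = - 2 * (s1 + s3)" using e3 a mult_left_cancel by blast
  have "L * L * (2 * c + L) = 0" using f1 f2 f3 by algebra
  then have "2 * c + L = 0" using L by simp
  then have c: "c = - L / 2" by (simp add: field_simps add_eq_0_iff)
  have pi: "s1 * s3 = L * L / 8" using f2 f3 c by algebra
  have "L = a * ((s1 * s3) * (s1 * s3))" using e0 by algebra
  then have "L = a * (L * L / 8) * (L * L / 8)" unfolding pi by simp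
  then have "64 * L = a * (L * L * L * L)" by (simp add: field_simps)
  then have "L * (a * L ^ 3 - 64) = 0" by algebra
  then have "a * L ^ 3 = 64" using L by simp
  then have "a = 64 / L ^ 3" using L by (simp add: field_simps)
  with c show ?thesis by simp
qed


lemma prod8:
  fixes x y :: nat
  assumes "x * y = 8"
  shows "x = 1 \<and> y = 8 \<or> x = 2 \<and> y = 4 \<or> x = 4 \<and> y = 2 \<or> x = 8 \<and> y = 1"
proof -
  have "y \<noteq> 0"
  proof
    assume "y = 0" with assms show False by simp
  qed
  then have "x \<le> x * y" by simp
  then have "x \<le> 8" using assms by simp
  then have "x = 0 \<or> x = 1 \<or> x = 2 \<or> x = 3 \<or> x = 4 \<or> x = 5 \<or> x = 6 \<or> x = 7 \<or> x = 8" by linarith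
  then show ?thesis using assms by (elim disjE; simp; presburger)
qed

lemma k2d1:
  fixes x1 y1 y2 y3 :: nat
  assumes e1: "x1 + y1 = 16" and e2: "x1*y1 + y2 = 40" and e3: "x1*y2 + y3 = 32" and e4: "x1*y3 = 8"
  shows False
  using prod8[OF e4] e1 e2 e3 by (elim disjE conjE; simp; presburger)

lemma k2d3:
  fixes x1 x2 x3 y1 :: nat
  assumes e1: "x1 + y1 = 16" and e2: "x2 + x1*y1 = 40" and e3: "x3 + x2*y1 = 32" and e4: "x3*y1 = 8"
  shows False
  using prod8[OF e4] e1 e2 e3 by (elim disjE conjE; simp; presburger)

lemma k2d2:
  fixes x1 x2 y1 y2 :: nat
  assumes e1: "x1 + y1 = 16" and e2: "x2 + x1*y1 + y2 = 40" and e3: "x2*y1 + x1*y2 = 32" and e4: "x2*y2 = 8"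
  shows False
  using prod8[OF e4]
proof (elim disjE conjE)
  assume "x2 = 1" "y2 = 8" then show False using e1 e3 by (simp; presburger)
next
  assume "x2 = 2" "y2 = 4"
  then have "2 * y1 + x1 * 4 = 32" using e3 by simp
  then have "x1 = 0" using e1 by linarith
  then show False using e2 \<open>x2 = 2\<close> \<open>y2 = 4\<close> by simp
next
  assume "x2 = 4" "y2 = 2"
  then have "4 * y1 + x1 * 2 = 32" using e3 by simp
  then have "y1 = 0" using e1 by linarith
  then show False using e2 \<open>x2 = 4\<close> \<open>y2 = 2\<close> by simp
next
  assume "x2 = 8" "y2 = 1" then show False using e1 e3 by (simp; presburger)
qed

lemma k1d1:
  fixes x1 y1 y2 y3 :: nat
  assumes e1: "x1 + y1 = 16" and e2: "x1*y1 + y2 = 20" and e3: "x1*y2 + y3 = 8" and e4: "x1*y3 = 1"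
  shows False
  using e4 e1 e2 e3 by (simp; presburger)

lemma k1d3:
  fixes x1 x2 x3 y1 :: nat
  assumes e1: "x1 + y1 = 16" and e2: "x2 + x1*y1 = 20" and e3: "x3 + x2*y1 = 8" and e4: "x3*y1 = 1"
  shows False
  using e4 e1 e2 e3 by (simp; presburger)

lemma k1d2:
  fixes x1 x2 y1 y2 :: nat
  assumes e1: "x1 + y1 = 16" and e2: "x2 + x1*y1 + y2 = 20" and e3: "x2*y1 + x1*y2 = 8" and e4: "x2*y2 = 1"
  shows False
  using e4 e1 e3 by (simp; presburger)


lemma disc_split:
  assumes sg: "simple_graph V E" and nc: "\<not> graph_connected V E" and ne: "V \<noteq> {}"
  obtains A where "A \<noteq> {}" "V - A \<noteq> {}" "A \<subseteq> V" "ip V E = ip A E * ip (V - A) E"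
proof -
  from nc ne obtain u v where uv: "u \<in> V" "v \<in> V" "\<not> E\<^sup>*\<^sup>* u v"
    unfolding graph_connected_def by blast
  define A where "A = {w \<in> V. E\<^sup>*\<^sup>* u w}"
  have fin: "finite V" and sym: "\<And>x y. E x y \<Longrightarrow> E y x" using sg by (auto simp: simple_graph_def)
  have uA: "u \<in> A" using uv by (simp add: A_def)
  have vA: "v \<in> V - A" using uv by (simp add: A_def)
  have md: "(E x y \<or> E y x) \<longleftrightarrow> y \<in> {}" if "x \<in> A" "y \<in> V - A" for x y
  proof -
    have "\<not> E x y"
    proof
      assume "E x y"
      then have "E\<^sup>*\<^sup>* u y" using that(1) by (auto simp: A_def intro: rtranclp.rtrancl_into_rtrancl)
      then show False using that(2) by (simp add: A_def)
    qed
    moreover have "\<not> E y x" using calculation sym by blast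
    ultimately show ?thesis by simp
  qed
  have "ip V E = ip (V - A) E + (ip A E - 1) * ip (V - A - {}) E"
    by (rule ip_module) (use fin md in \<open>auto simp: A_def\<close>)
  then have "ip V E = ip A E * ip (V - A) E" by (simp add: algebra_simps)
  moreover have "A \<subseteq> V" by (auto simp: A_def)
  ultimately show ?thesis using that uA vA by blast
qed

lemma sub_facts:
  assumes fin: "finite A" and irr: "\<And>x. \<not> E x x" and ne: "A \<noteq> {}"
  shows "coeff (ip A E) i = of_nat (card {S. indep_set A E S \<and> card S = i})"
    and "card {S. indep_set A E S \<and> card S = 0} = 1"
    and "degree (ip A E) \<ge> 1"
    and "i > degree (ip A E) \<Longrightarrow> card {S. indep_set A E S \<and> card S = i} = 0"
    and "ip A E \<noteq> 0"
proof -
  show c: "coeff (ip A E) i = of_nat (card {S. indep_set A E S \<and> card S = i})" for i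
    by (rule coeff_ip[OF fin])
  have "{S. indep_set A E S \<and> card S = 0} = {{}}"
  proof (intro equalityI subsetI)
    fix S assume "S \<in> {S. indep_set A E S \<and> card S = 0}"
    then have "S \<subseteq> A" "card S = 0" by (auto simp: indep_set_def)
    moreover have "finite S" using calculation(1) fin by (rule finite_subset)
    ultimately show "S \<in> {{}}" by simp
  qed simp
  then show c0: "card {S. indep_set A E S \<and> card S = 0} = 1" by simp
  obtain a where a: "a \<in> A" using ne by auto
  have "indep_set A E {a}" using a irr by (simp add: indep_set_def)
  then have "card {a} \<le> indep_number A E" by (rule indep_card_le[OF fin])
  then show "degree (ip A E) \<ge> 1" by (simp add: degree_ip[OF fin])
  show "ip A E \<noteq> 0"
  proof
    assume "ip A E = 0"
    then have "coeff (ip A E) 0 = 0" by simp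
    then show False using c[of 0] c0 by simp
  qed
  show "card {S. indep_set A E S \<and> card S = i} = 0" if "i > degree (ip A E)"
    using coeff_eq_0[OF that] c[of i] by simp
qed

lemma no_disc:
  fixes V :: "'a set"
  assumes sg: "simple_graph V E" and nc: "\<not> graph_connected V E" and \<alpha>: "indep_number V E = 4"
    and hp: "ip V E = [:1, 16, of_nat t2, of_nat t3, of_nat t4:]"
    and ht: "(t2, t3, t4) = (20, 8, 1) \<or> (t2, t3, t4) = (40, 32, 8)"
  shows False
proof -
  have fin: "finite V" and irr: "\<And>x. \<not> E x x" using sg by (auto simp: simple_graph_def)
  have ne: "V \<noteq> {}"
  proof
    assume "V = {}"
    then have "ip V E = 1" by simp
    then show False using hp by (simp add: one_pCons)
  qed
  obtain A where A: "A \<noteq> {}" "V - A \<noteq> {}" "A \<subseteq> V" and spl: "ip V E = ip A E * ip (V - A) E"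
    using disc_split[OF sg nc ne] by blast
  define B where "B = V - A"
  have finA: "finite A" using fin A(3) by (rule finite_subset[rotated])
  have finB: "finite B" using fin by (simp add: B_def)
  have Bne: "B \<noteq> {}" using A(2) by (simp add: B_def)
  define cx where "cx i = card {S. indep_set A E S \<and> card S = i}" for i
  define cy where "cy i = card {S. indep_set B E S \<and> card S = i}" for i
  note fa = sub_facts[where A=A and E=E, OF finA irr A(1), folded cx_def]
  note fb = sub_facts[where A=B and E=E, OF finB irr Bne, folded cy_def]
  define dA where "dA = degree (ip A E)"
  define dB where "dB = degree (ip B E)"
  have dV: "degree (ip V E) = 4" using degree_ip[OF fin] \<alpha> by simp
  have "degree (ip V E) = dA + dB" unfolding spl B_def[symmetric] dA_def dB_def
    using fa(5) fb(5) by (rule degree_mult_eq)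
  then have dd: "dA + dB = 4" using dV by simp
  have dA1: "dA \<ge> 1" using fa(3) by (simp add: dA_def)
  have dB1: "dB \<ge> 1" using fb(3) by (simp add: dB_def)
  have x0: "cx 0 = 1" and y0: "cy 0 = 1" using fa(2) fb(2) by simp_all
  have xz: "cx i = 0" if "i > dA" for i using fa(4) that by (simp add: dA_def)
  have yz: "cy i = 0" if "i > dB" for i using fb(4) that by (simp add: dB_def)
  define t where "t = [1, 16, t2, t3, t4]"
  have cV: "coeff (ip V E) n = of_nat (t ! n)" if "n \<le> 4" for n
  proof -
    have "n = 0 \<or> n = 1 \<or> n = 2 \<or> n = 3 \<or> n = 4" using that by linarith
    then show ?thesis unfolding hp t_def by (auto simp: numeral_eq_Suc)
  qed
  have eqn: "(\<Sum>i\<le>n. cx i * cy (n - i)) = t ! n" if "n \<le> 4" for n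
  proof -
    have "of_nat (t ! n) = coeff (ip A E * ip B E) n" using cV[OF that] spl by (simp add: B_def)
    also have "\<dots> = (\<Sum>i\<le>n. coeff (ip A E) i * coeff (ip B E) (n - i))" by (rule coeff_mult)
    also have "\<dots> = (\<Sum>i\<le>n. of_nat (cx i) * of_nat (cy (n - i)))" using fa(1) fb(1) by simp
    also have "\<dots> = (of_nat (\<Sum>i\<le>n. cx i * cy (n - i)) :: complex)" by simp
    finally show ?thesis by (simp only: of_nat_eq_iff)
  qed
  have E1: "cx 0 * cy 1 + cx 1 * cy 0 = 16" using eqn[of 1] by (simp add: t_def)
  have E2: "cx 0 * cy 2 + cx 1 * cy 1 + cx 2 * cy 0 = t2" using eqn[of 2] by (simp add: t_def numeral_eq_Suc)
  have E3: "cx 0 * cy 3 + cx 1 * cy 2 + cx 2 * cy 1 + cx 3 * cy 0 = t3" using eqn[of 3] by (simp add: t_def numeral_eq_Suc)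
  have E4: "cx 0 * cy 4 + cx 1 * cy 3 + cx 2 * cy 2 + cx 3 * cy 1 + cx 4 * cy 0 = t4"
    using eqn[of 4] by (simp add: t_def numeral_eq_Suc)
  have "dA = 1 \<or> dA = 2 \<or> dA = 3" using dd dA1 dB1 by linarith
  then show False
  proof (elim disjE)
    assume d: "dA = 1"
    then have z: "cx 2 = 0" "cx 3 = 0" "cx 4 = 0" "cy 4 = 0" using xz yz dd by auto
    have e1: "cx 1 + cy 1 = 16" and e2: "cx 1 * cy 1 + cy 2 = t2" and e3: "cx 1 * cy 2 + cy 3 = t3" and e4: "cx 1 * cy 3 = t4"
      using E1 E2 E3 E4 z x0 y0 by simp_all
    show False using ht
    proof
      assume "(t2, t3, t4) = (20, 8, 1)" then show False using k1d1[OF e1] e2 e3 e4 by simp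
    next
      assume "(t2, t3, t4) = (40, 32, 8)" then show False using k2d1[OF e1] e2 e3 e4 by simp
    qed
  next
    assume d: "dA = 2"
    then have z: "cx 3 = 0" "cx 4 = 0" "cy 3 = 0" "cy 4 = 0" using xz yz dd by auto
    have e1: "cx 1 + cy 1 = 16" and e2: "cx 2 + cx 1 * cy 1 + cy 2 = t2" and e3: "cx 2 * cy 1 + cx 1 * cy 2 = t3" and e4: "cx 2 * cy 2 = t4"
      using E1 E2 E3 E4 z x0 y0 by simp_all
    show False using ht
    proof
      assume "(t2, t3, t4) = (20, 8, 1)" then show False using k1d2[OF e1] e2 e3 e4 by simp
    next
      assume "(t2, t3, t4) = (40, 32, 8)" then show False using k2d2[OF e1] e2 e3 e4 by simp
    qed
  next
    assume d: "dA = 3"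
    then have z: "cx 4 = 0" "cy 2 = 0" "cy 3 = 0" "cy 4 = 0" using xz yz dd by auto
    have e1: "cx 1 + cy 1 = 16" and e2: "cx 2 + cx 1 * cy 1 = t2" and e3: "cx 3 + cx 2 * cy 1 = t3" and e4: "cx 3 * cy 1 = t4"
      using E1 E2 E3 E4 z x0 y0 by simp_all
    show False using ht
    proof
      assume "(t2, t3, t4) = (20, 8, 1)" then show False using k1d3[OF e1] e2 e3 e4 by simp
    next
      assume "(t2, t3, t4) = (40, 32, 8)" then show False using k2d3[OF e1] e2 e3 e4 by simp
    qed
  qed
qed


lemma perm_prod_list:
  fixes g :: "'a \<Rightarrow> 'b::comm_monoid_mult"
  assumes "mset xs = mset ys" shows "prod_list (map g xs) = prod_list (map g ys)"
proof -
  have "prod_list (map g xs) = prod_mset (mset (map g xs))" by (rule prod_mset_prod_list[symmetric])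
  also have "\<dots> = prod_mset (image_mset g (mset xs))" by (simp only: mset_map)
  also have "\<dots> = prod_mset (image_mset g (mset ys))" using assms by simp
  also have "\<dots> = prod_mset (mset (map g ys))" by (simp only: mset_map)
  also have "\<dots> = prod_list (map g ys)" by (rule prod_mset_prod_list)
  finally show ?thesis .
qed

lemma coeff0_ip:
  assumes "finite W" shows "coeff (ip W E) 0 = 1"
proof -
  have "{S. indep_set W E S \<and> card S = 0} = {{}}"
  proof (intro equalityI subsetI)
    fix S assume "S \<in> {S. indep_set W E S \<and> card S = 0}"
    then have "S \<subseteq> W" "card S = 0" by (auto simp: indep_set_def)
    moreover have "finite S" using calculation(1) assms by (rule finite_subset)
    ultimately show "S \<in> {{}}" by simp
  qed simp
  then show ?thesis by (simp add: coeff_ip[OF assms])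
qed

lemma ip_nonzero:
  assumes "finite W" shows "ip W E \<noteq> 0"
proof -
  have "{S. indep_set W E S \<and> card S = 0} = {{}}"
  proof (intro equalityI subsetI)
    fix S assume "S \<in> {S. indep_set W E S \<and> card S = 0}"
    then have "S \<subseteq> W" "card S = 0" by (auto simp: indep_set_def)
    moreover have "finite S" using calculation(1) assms by (rule finite_subset)
    ultimately show "S \<in> {{}}" by simp
  qed simp
  then have "coeff (ip W E) 0 = 1" by (simp add: coeff_ip[OF assms])
  then show ?thesis by auto
qed

lemma seg_eq:
  assumes "L > 0"
  shows "closed_segment (complex_of_real (-L)) 0 = of_real ` {-L..0}"
  using assms by (metis closed_segment_eq_real_ivl1 closed_segment_of_real neg_le_0_iff_le of_real_0 less_imp_le)

lemma mem_seg:
  assumes "L > 0"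
  shows "z \<in> closed_segment (complex_of_real (-L)) 0 \<longleftrightarrow> Im z = 0 \<and> -L \<le> Re z \<and> Re z \<le> 0"
proof
  assume "z \<in> closed_segment (complex_of_real (-L)) 0"
  then obtain x where "x \<in> {-L..0}" "z = of_real x" unfolding seg_eq[OF assms] by blast
  then show "Im z = 0 \<and> -L \<le> Re z \<and> Re z \<le> 0" by simp
next
  assume h: "Im z = 0 \<and> -L \<le> Re z \<and> Re z \<le> 0"
  then have "z = of_real (Re z)" by (simp add: complex_eq_iff)
  then show "z \<in> closed_segment (complex_of_real (-L)) 0" unfolding seg_eq[OF assms] using h by auto
qed

lemma real_roots4:
  fixes q :: "complex poly" and L :: real
  assumes dq: "degree q = 4" and Lpos: "L > 0"
    and rts: "\<And>z. poly q z = 0 \<Longrightarrow> z \<in> closed_segment (complex_of_real (-L)) 0"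
  obtains r1 r2 r3 r4 :: real where "r1 \<le> r2" "r2 \<le> r3" "r3 \<le> r4" "-L \<le> r1" "r4 \<le> 0"
    "q = smult (lead_coeff q) ([:-of_real r1, 1:] * ([:-of_real r2, 1:] * ([:-of_real r3, 1:] * ([:-of_real r4, 1:] * 1))))"
proof -
  obtain rs where rs: "length rs = 4" "q = smult (lead_coeff q) (\<Prod>r\<leftarrow>rs. [:-r, 1:])"
    using poly_split_roots[OF dq] by blast
  have inS: "r \<in> closed_segment (complex_of_real (-L)) 0" if "r \<in> set rs" for r
  proof (rule rts)
    show "poly q r = 0"
      by (subst rs(2)) (use that in \<open>auto simp: poly_prod_linear prod_list_zero_iff\<close>)
  qed
  have rre: "r = of_real (Re r)" if "r \<in> set rs" for r
    using inS[OF that] mem_seg[OF Lpos] by (simp add: complex_eq_iff)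
  define rr where "rr = sort (map Re rs)"
  have "map (\<lambda>r. [:-r, 1:]) rs = map (\<lambda>x. [:-of_real x, 1:]) (map Re rs)"
    unfolding map_map
  proof (rule map_cong[OF refl])
    fix r assume "r \<in> set rs"
    then have "of_real (Re r) = r" using rre by metis
    then show "[:-r, 1:] = ((\<lambda>x. [:-of_real x, 1:]) \<circ> Re) r" by simp
  qed
  then have "(\<Prod>r\<leftarrow>rs. [:-r, 1:]) = (\<Prod>x\<leftarrow>map Re rs. [:-of_real x, 1:])" by (simp only:)
  also have "\<dots> = (\<Prod>x\<leftarrow>rr. [:-of_real x, 1:])" unfolding rr_def
    by (rule perm_prod_list) simp
  finally have qf: "q = smult (lead_coeff q) (\<Prod>x\<leftarrow>rr. [:-of_real x, 1:])" using rs(2) by simp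
  have "length rr = 4" using rs(1) by (simp add: rr_def)
  then have "\<exists>r1 r2 r3 r4. rr = [r1, r2, r3, r4]" by (auto simp: numeral_eq_Suc length_Suc_conv)
  then obtain r1 r2 r3 r4 where rr4: "rr = [r1, r2, r3, r4]" by blast
  have "sorted rr" by (simp add: rr_def)
  then have srt: "r1 \<le> r2" "r2 \<le> r3" "r3 \<le> r4" using rr4 by auto
  have "set rr = Re ` set rs" by (simp add: rr_def)
  then have "\<forall>x\<in>set rr. -L \<le> x \<and> x \<le> 0" using inS mem_seg[OF Lpos] by auto
  then have "-L \<le> r1" "r4 \<le> 0" using rr4 by auto
  moreover have "q = smult (lead_coeff q) ([:-of_real r1, 1:] * ([:-of_real r2, 1:] * ([:-of_real r3, 1:] * ([:-of_real r4, 1:] * 1))))"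
    using qf rr4 by simp
  ultimately show ?thesis using that srt by blast
qed


lemma part2_core:
  fixes V :: "'a set" and L :: real
  assumes sg: "simple_graph V E" and \<alpha>: "indep_number V E = 4" and Lpos: "L > 0"
    and att: "indep_attractor_is V E (closed_segment (complex_of_real (-L)) 0)"
  shows "ip V E = 1 + smult (of_real (64 / L ^ 3))
            ([:of_real L, 1:] * [:of_real (L / 2), 1:] * [:of_real (L / 2), 1:] * [:0, 1:])"
proof -
  have fin: "finite V" and irr: "\<And>x. \<not> E x x" using sg by (auto simp: simple_graph_def)
  define S where "S = closed_segment (complex_of_real (-L)) 0"
  note memS = mem_seg[OF Lpos, folded S_def]
  define p where "p = ip V E + [:-1:]"
  have pp: "poly p w = poly (ip V E) w - 1" for w by (simp add: p_def)
  have dip: "degree (ip V E) = 4" using degree_ip[OF fin] \<alpha> by simp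
  have dp: "degree p = 4" unfolding p_def using dip by (subst degree_add_eq_left) auto
  have lcp: "lead_coeff p = lead_coeff (ip V E)" using dp dip by (simp add: p_def numeral_eq_Suc)
  have ipnz: "ip V E \<noteq> 0" using dip by auto
  have lnz: "lead_coeff p \<noteq> 0" using lcp ipnz by simp
  define N4 where "N4 = card {S. indep_set V E S \<and> card S = 4}"
  have lcN: "lead_coeff p = of_nat N4" using lcp dip by (simp add: coeff_ip[OF fin] N4_def)
  have N4pos: "real N4 > 0" using lnz lcN by simp
  define R where "R m = indep_roots (lex_pow_V V m) (lex_adj E)" for m
  have pfun: "(\<lambda>w. poly (ip V E) w - 1) = poly p" using pp by (intro ext) simp
  have R: "R m = {z. (poly p ^^ m) z = -1}" for m
    unfolding R_def roots_lex_eq[OF fin irr] pfun ..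
  have finR: "finite (R m)" for m
  proof -
    have fl: "finite (lex_pow_V V m)" by (rule finite_lex_pow_V[OF fin])
    have "R m = {z. poly (ip (lex_pow_V V m) (lex_adj E)) z = 0}"
      unfolding R_def indep_roots_def indep_poly_ip[OF fl] ..
    then show ?thesis using poly_roots_finite[OF ip_nonzero[OF fl]] by simp
  qed
  have att': "compact S" "S \<noteq> {}" "eventually (\<lambda>m. R m \<noteq> {}) sequentially"
      "(\<lambda>m. hausdorff_dist (R m) S) \<longlonglongrightarrow> 0"
    using att unfolding indep_attractor_is_def R_def S_def by auto
  have deg1: "degree p \<ge> 1" using dp by simp
  note AP = attractor_props[OF deg1 R finR att'(1) att'(2) att'(3) att'(4)]
  have H2: "\<forall>s\<in>S. poly p s \<in> S" and H1: "\<forall>z. poly p z \<in> S \<longrightarrow> z \<in> S"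
    using AP by blast+
  have p0S: "poly p z = 0 \<Longrightarrow> z \<in> closed_segment (complex_of_real (-L)) 0" for z
    using H1 memS[of 0] unfolding S_def by auto
  obtain r1 r2 r3 r4 where r: "r1 \<le> r2" "r2 \<le> r3" "r3 \<le> r4" "-L \<le> r1" "r4 \<le> 0"
    and pf: "p = smult (lead_coeff p) ([:-of_real r1, 1:] * ([:-of_real r2, 1:] * ([:-of_real r3, 1:] * ([:-of_real r4, 1:] * 1))))"
    using real_roots4[OF dp Lpos p0S] by blast
  define pL where "pL = p + [:of_real L:]"
  have dpL: "degree pL = 4" unfolding pL_def using dp by (subst degree_add_eq_left) auto
  have lpL: "lead_coeff pL = lead_coeff p" using dp dpL by (simp add: pL_def numeral_eq_Suc)
  have pLS: "poly pL z = 0 \<Longrightarrow> z \<in> closed_segment (complex_of_real (-L)) 0" for z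
  proof -
    assume "poly pL z = 0"
    then have "poly p z = - of_real L" by (simp add: pL_def add_eq_0_iff)
    then have "poly p z \<in> S" using memS Lpos by simp
    then show ?thesis using H1 unfolding S_def by auto
  qed
  obtain s1 s2 s3 s4 where s: "s1 \<le> s2" "s2 \<le> s3" "s3 \<le> s4" "-L \<le> s1" "s4 \<le> 0"
    and pLf: "pL = smult (lead_coeff pL) ([:-of_real s1, 1:] * ([:-of_real s2, 1:] * ([:-of_real s3, 1:] * ([:-of_real s4, 1:] * 1))))"
    using real_roots4[OF dpL Lpos pLS] by blast
  define a where "a = real N4"
  define fr where "fr x = a * (((x - r1) * (x - r2)) * ((x - r3) * (x - r4)))" for x
  define gr where "gr x = a * (((x - s1) * (x - s2)) * ((x - s3) * (x - s4)))" for x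
  have pr: "poly p (of_real x) = of_real (fr x)" for x
    by (subst pf) (simp add: lcN fr_def a_def algebra_simps)
  have pLr: "poly pL (of_real x) = of_real (gr x)" for x
    by (subst pLf) (simp add: lpL lcN gr_def a_def algebra_simps)
  have frS: "-L \<le> fr x \<and> fr x \<le> 0" if "-L \<le> x" "x \<le> 0" for x
  proof -
    have "of_real x \<in> S" using memS that by simp
    then have "poly p (of_real x) \<in> S" using H2 by blast
    then show ?thesis unfolding pr memS by simp
  qed
  have grfr: "gr x = fr x + L" for x
  proof -
    have "of_real (gr x) = (of_real (fr x + L) :: complex)"
      unfolding pLr[symmetric] of_real_add pr[symmetric] by (simp add: pL_def)
    then show ?thesis by (simp only: of_real_eq_iff)
  qed
  have hr: "a * (((x - r1) * (x - r2)) * ((x - r3) * (x - r4))) \<le> 0" if "-L \<le> x" "x \<le> 0" for x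
    using frS[OF that] by (simp add: fr_def)
  have hs: "0 \<le> a * (((x - s1) * (x - s2)) * ((x - s3) * (x - s4)))" if "-L \<le> x" "x \<le> 0" for x
    using frS[OF that] grfr[of x] by (simp add: gr_def)
  have "poly (ip V E) 0 = 1" by (simp add: poly_0_coeff_0 coeff0_ip[OF fin])
  then have "poly p 0 = 0" by (simp add: pp)
  then have "fr 0 = 0" using pr[of 0] by simp
  then have r0: "r1 * r2 * r3 * r4 = 0" using N4pos by (simp add: fr_def a_def)
  have apos: "a > 0" using N4pos by (simp add: a_def)
  have st: "r1 = -L \<and> r2 = r3 \<and> r4 = 0 \<and> s1 = s2 \<and> s3 = s4"
    by (rule sign_structure[OF apos r(1-5) s(1-5) hr hs r0])
  define c where "c = complex_of_real r2"
  define aa where "aa = complex_of_real a"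
  have st1: "r1 = -L" and st2: "r3 = r2" and st3: "r4 = 0" and st4: "s2 = s1" and st5: "s4 = s3"
    using st by auto
  have pf2: "p = smult aa ([:of_real L, 1:] * [:-c, 1:] * [:-c, 1:] * [:0, 1:])"
    using pf unfolding st1 st2 st3 lcN aa_def a_def c_def
    by (simp only: of_real_minus minus_minus of_real_0 minus_zero mult_1_right mult.assoc of_real_of_nat_eq)
  have pLf2: "pL = smult aa ([:-of_real s1, 1:] * [:-of_real s1, 1:] * [:-of_real s3, 1:] * [:-of_real s3, 1:])"
    using pLf unfolding st4 st5 lpL lcN aa_def a_def
    by (simp only: mult_1_right mult.assoc of_real_of_nat_eq)
  have eq: "smult aa ([:of_real L, 1:] * [:-c, 1:] * [:-c, 1:] * [:0, 1:]) + [:of_real L:]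
      = smult aa ([:-of_real s1, 1:] * [:-of_real s1, 1:] * [:-of_real s3, 1:] * [:-of_real s3, 1:])"
  proof -
    have h: "pL = p + [:of_real L:]" by (simp add: pL_def)
    show ?thesis using h unfolding pf2 pLf2 by (rule sym)
  qed
  have aa0: "aa \<noteq> 0" using apos by (simp add: aa_def)
  have L0: "complex_of_real L \<noteq> 0" using Lpos by simp
  have cc: "c = - of_real L / 2 \<and> aa = 64 / (of_real L) ^ 3"
    by (rule cheb_alg[OF aa0 L0 eq])
  have "ip V E = p + [:1:]" by (simp add: p_def add.assoc)
  then have "ip V E = p + 1" by (simp only: pCons_one)
  also have "\<dots> = 1 + smult (of_real (64 / L ^ 3))
            ([:of_real L, 1:] * [:of_real (L / 2), 1:] * [:of_real (L / 2), 1:] * [:0, 1:])"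
  proof -
    have c': "-c = of_real (L / 2)" using cc by simp
    have aa': "aa = of_real (64 / L ^ 3)" using cc by simp
    show ?thesis unfolding pf2 c' aa' by (rule add.commute)
  qed
  finally show ?thesis .
qed


lemma hf1: "poly [:1, 16, 20, 8, 1:] w - 1 = fch (real 1) w"
proof -
  have a: "poly [:1, 16, 20, 8, 1:] w = 1 + w * (16 + w * (20 + w * (8 + w * 1)))" by (simp add: algebra_simps)
  have b: "fch (real 1) w = 16 * w * (1 + 1 * w / 2)^2 * (1 + 1 * w / 4)" by (simp add: fch_def)
  show ?thesis unfolding a b by (simp add: field_simps power2_eq_square)
qed
lemma hf2: "poly [:1, 16, 40, 32, 8:] w - 1 = fch (real 2) w"
proof -
  have a: "poly [:1, 16, 40, 32, 8:] w = 1 + w * (16 + w * (40 + w * (32 + w * 8)))" by (simp add: algebra_simps)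
  have b: "fch (real 2) w = 16 * w * (1 + 2 * w / 2)^2 * (1 + 2 * w / 4)" by (simp add: fch_def)
  show ?thesis unfolding a b by (simp add: field_simps power2_eq_square)
qed
lemma hf3: "poly [:1, 16, 60, 72, 27:] w - 1 = fch (real 3) w"
proof -
  have a: "poly [:1, 16, 60, 72, 27:] w = 1 + w * (16 + w * (60 + w * (72 + w * 27)))" by (simp add: algebra_simps)
  have b: "fch (real 3) w = 16 * w * (1 + 3 * w / 2)^2 * (1 + 3 * w / 4)" by (simp add: fch_def)
  show ?thesis unfolding a b by (simp add: field_simps power2_eq_square)
qed
lemma hf4: "poly [:1, 16, 80, 128, 64:] w - 1 = fch (real 4) w"
proof -
  have a: "poly [:1, 16, 80, 128, 64:] w = 1 + w * (16 + w * (80 + w * (128 + w * 64)))" by (simp add: algebra_simps)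
  have b: "fch (real 4) w = 16 * w * (1 + 4 * w / 2)^2 * (1 + 4 * w / 4)" by (simp add: fch_def)
  show ?thesis unfolding a b by (simp add: field_simps power2_eq_square)
qed

lemma exists_graph:
  fixes t :: cg and k :: nat
  assumes k: "1 \<le> k" "k \<le> 4" and cp: "cpoly t = P" and dP: "degree P = 4"
    and hf: "\<And>w. poly P w - 1 = fch (real k) w"
  shows "\<exists>(V::nat set) E. simple_graph V E \<and> indep_number V E = 4 \<and>
              indep_attractor_is V E (closed_segment (complex_of_real (- 4 / real k)) 0)"
proof (intro exI conjI)
  show "simple_graph (cverts t) (cadj t)" by (rule cg_simple)
  show "indep_number (cverts t) (cadj t) = 4"
    using degree_ip[OF cverts_finite, of t "cadj t"] ip_cg[of t] cp dP by simp
  have "indep_attractor_is (cverts t) (cadj t) (Sk (real k))"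
    by (rule attractor_of_cheb) (use k cverts_finite cadj_irr ip_cg cp hf in auto)
  moreover have "Sk (real k) = closed_segment (complex_of_real (- 4 / real k)) 0"
    using k by (intro Sk_def) auto
  ultimately show "indep_attractor_is (cverts t) (cadj t) (closed_segment (complex_of_real (- 4 / real k)) 0)"
    by simp
qed


lemma part2_k:
  fixes V :: "'a set" and k :: nat
  assumes k: "k \<in> {1, 2}" and sg: "simple_graph V E" and nc: "\<not> graph_connected V E"
    and \<alpha>: "indep_number V E = 4"
    and att: "indep_attractor_is V E (closed_segment (complex_of_real (- 4 / real k)) 0)"
  shows False
proof -
  define L where "L = 4 / real k"
  have Lpos: "L > 0" using k by (auto simp: L_def)
  have "- 4 / real k = - L" by (simp add: L_def)
  then have att': "indep_attractor_is V E (closed_segment (complex_of_real (- L)) 0)" using att by simp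
  have ipf: "ip V E = 1 + smult (of_real (64 / L ^ 3))
            ([:of_real L, 1:] * [:of_real (L / 2), 1:] * [:of_real (L / 2), 1:] * [:0, 1:])"
    by (rule part2_core[OF sg \<alpha> Lpos att'])
  from k show False
  proof
    assume k1: "k = 1"
    then have "L = 4" by (simp add: L_def)
    then have "ip V E = [:1, 16, of_nat 20, of_nat 8, of_nat 1:]" using ipf by (simp add: one_pCons)
    then show False using no_disc[OF sg nc \<alpha>, of 20 8 1] by simp
  next
    assume "k \<in> {2}"
    then have "L = 2" by (simp add: L_def)
    then have "ip V E = [:1, 16, of_nat 40, of_nat 32, of_nat 8:]" using ipf by (simp add: one_pCons)
    then show False using no_disc[OF sg nc \<alpha>, of 40 32 8] by simp
  qed
qed

theorem theoremC:
  shows "(\<forall>k::nat. 1 \<le> k \<and> k \<le> 4 \<longrightarrow>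
           (\<exists>(V::nat set) E. simple_graph V E \<and> indep_number V E = 4 \<and>
              indep_attractor_is V E (closed_segment (complex_of_real (- 4 / real k)) 0)))
       \<and> (\<forall>k::nat. k \<in> {1, 2} \<longrightarrow>
           \<not> (\<exists>(V::'a set) E. simple_graph V E \<and> \<not> graph_connected V E \<and> indep_number V E = 4 \<and>
              indep_attractor_is V E (closed_segment (complex_of_real (- 4 / real k)) 0)))"
proof (intro conjI allI impI)
  fix k :: nat assume k: "1 \<le> k \<and> k \<le> 4"
  then have "k = 1 \<or> k = 2 \<or> k = 3 \<or> k = 4" by auto
  then show "\<exists>(V::nat set) E. simple_graph V E \<and> indep_number V E = 4 \<and>
              indep_attractor_is V E (closed_segment (complex_of_real (- 4 / real k)) 0)"
  proof (elim disjE)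
    assume "k = 1" then show ?thesis using exists_graph[OF _ _ cp1 _ hf1] by simp
  next
    assume "k = 2" then show ?thesis using exists_graph[OF _ _ cp2 _ hf2] by simp
  next
    assume "k = 3" then show ?thesis using exists_graph[OF _ _ cp3 _ hf3] by simp
  next
    assume "k = 4" then show ?thesis using exists_graph[OF _ _ cp4 _ hf4] by simp
  qed
next
  fix k :: nat assume k: "k \<in> {1, 2}"
  show "\<not> (\<exists>(V::'a set) E. simple_graph V E \<and> \<not> graph_connected V E \<and> indep_number V E = 4 \<and>
              indep_attractor_is V E (closed_segment (complex_of_real (- 4 / real k)) 0))"
    using part2_k[OF k] by blast
qed


end
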